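(* Let $\mathbb{X}=(X,\tau_{\mathbb{X}})$ be a topological space, $\Omega_0$ a viable base of $\mathbb{X}$, $\mathbb{D}=(D,\sqsubseteq)$ a bc-domain and $D_0\subseteq D$ a basis of $\mathbb{D}$. Then $[\widehat{\mathbb{X}}_{\Omega_0}\to\mathbb{D}]$ is a bc-domain with basis $$\widehat{\mathbb{B}}=\Big\{\bigsqcup_{i\in I}b_i\chi_{\mathcal{O}_{{\downarrow}W_i}} : I\text{ finite},\ \{b_i\chi_{\mathcal{O}_{{\downarrow}W_i}}\}_{i\in I}\text{ consistent},\ W_i\in\Omega_0,\ b_i\in D_0\Big\},$$ where ${\downarrow}W=\{U\in\Omega_0:U\subseteq W\}$. If moreover $\Omega_0$ is countable and $\mathbb{D}$ is $\omega$-continuous, then $[\widehat{\mathbb{X}}_{\Omega_0}\to\mathbb{D}]$ is $\omega$-continuous.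
   Context: A viable base of $\mathbb{X}$ is a family $\Omega_0\subseteq\tau_{\mathbb{X}}$ closed under finite unions and finite intersections (so $\emptyset,X\in\Omega_0$) which is a base of $\tau_{\mathbb{X}}$. $\mathrm{Idl}(\Omega_0)$ is the set of ideals (nonempty, downward closed, directed subsets) of $(\Omega_0,\subseteq)$, ordered by inclusion; a complete lattice. A completely prime filter of a complete lattice $L$ is a nonempty upward closed $F\subseteq L$ closed under binary meets with $\bigvee A\in F\Rightarrow A\cap F\neq\emptyset$. $\widehat{\mathbb{X}}_{\Omega_0}$ is the set $\widehat{X}$ of completely prime filters of $\mathrm{Idl}(\Omega_0)$ with the topology whose open sets are exactly $\mathcal{O}_I=\{y: I\in y\}$. A bc-domain is a dcpo with least element $\bot$, continuous (each element is the directed join of elements way-below it), in which every subset with an upper bound has a join; a basis of a dcpo is a subset $B$ such that for every $x$, $\{a\in B: a\ll x\}$ is directed with join $x$; $\omega$-continuous means having a countable basis. $[\widehat{\mathbb{X}}_{\Omega_0}\to\mathbb{D}]$ is the set of functions continuous into the Scott topology of $D$, ordered pointwise. $b\chi_O$ is the function with value $b$ on $O$ and $\bot$ elsewhere; a family $\{b_i\chi_{O_i}\}$ is consistent if for every $J\subseteq I$ with $\bigcap_{j\in J}O_j\neq\emptyset$ the set $\{b_j: j\in J\}$ has an upper bound; joins of such families are pointwise. *)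

theory Defs
  imports "HOL-Analysis.Analysis"
begin

definition is_lub :: "'d set \<Rightarrow> ('d \<Rightarrow> 'd \<Rightarrow> bool) \<Rightarrow> 'd set \<Rightarrow> 'd \<Rightarrow> bool" where
  "is_lub S le A s \<longleftrightarrow> s \<in> S \<and> (\<forall>a\<in>A. le a s) \<and> (\<forall>u\<in>S. (\<forall>a\<in>A. le a u) \<longrightarrow> le s u)"

definition is_glb :: "'d set \<Rightarrow> ('d \<Rightarrow> 'd \<Rightarrow> bool) \<Rightarrow> 'd set \<Rightarrow> 'd \<Rightarrow> bool" where
  "is_glb S le A s \<longleftrightarrow> s \<in> S \<and> (\<forall>a\<in>A. le s a) \<and> (\<forall>u\<in>S. (\<forall>a\<in>A. le u a) \<longrightarrow> le u s)"

definition dlub :: "'d set \<Rightarrow> ('d \<Rightarrow> 'd \<Rightarrow> bool) \<Rightarrow> 'd set \<Rightarrow> 'd" where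
  "dlub S le A = (THE s. is_lub S le A s)"

definition dbot :: "'d set \<Rightarrow> ('d \<Rightarrow> 'd \<Rightarrow> bool) \<Rightarrow> 'd" where
  "dbot S le = (THE b. b \<in> S \<and> (\<forall>x\<in>S. le b x))"

definition directed_in :: "'d set \<Rightarrow> ('d \<Rightarrow> 'd \<Rightarrow> bool) \<Rightarrow> 'd set \<Rightarrow> bool" where
  "directed_in S le A \<longleftrightarrow> A \<subseteq> S \<and> A \<noteq> {} \<and> (\<forall>x\<in>A. \<forall>y\<in>A. \<exists>z\<in>A. le x z \<and> le y z)"

definition poset_on :: "'d set \<Rightarrow> ('d \<Rightarrow> 'd \<Rightarrow> bool) \<Rightarrow> bool" where
  "poset_on S le \<longleftrightarrow> (\<forall>x\<in>S. le x x) \<and> (\<forall>x\<in>S. \<forall>y\<in>S. le x y \<and> le y x \<longrightarrow> x = y)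
     \<and> (\<forall>x\<in>S. \<forall>y\<in>S. \<forall>z\<in>S. le x y \<and> le y z \<longrightarrow> le x z)"

definition dcpo :: "'d set \<Rightarrow> ('d \<Rightarrow> 'd \<Rightarrow> bool) \<Rightarrow> bool" where
  "dcpo S le \<longleftrightarrow> poset_on S le \<and> (\<forall>A. directed_in S le A \<longrightarrow> (\<exists>s. is_lub S le A s))"

definition way_below :: "'d set \<Rightarrow> ('d \<Rightarrow> 'd \<Rightarrow> bool) \<Rightarrow> 'd \<Rightarrow> 'd \<Rightarrow> bool" where
  "way_below S le x y \<longleftrightarrow> x \<in> S \<and> y \<in> S \<and>
     (\<forall>A s. directed_in S le A \<longrightarrow> is_lub S le A s \<longrightarrow> le y s \<longrightarrow> (\<exists>a\<in>A. le x a))"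

definition continuous_dcpo :: "'d set \<Rightarrow> ('d \<Rightarrow> 'd \<Rightarrow> bool) \<Rightarrow> bool" where
  "continuous_dcpo S le \<longleftrightarrow> dcpo S le \<and>
     (\<forall>x\<in>S. directed_in S le {a\<in>S. way_below S le a x} \<and> is_lub S le {a\<in>S. way_below S le a x} x)"

definition bc_domain :: "'d set \<Rightarrow> ('d \<Rightarrow> 'd \<Rightarrow> bool) \<Rightarrow> bool" where
  "bc_domain S le \<longleftrightarrow> dcpo S le \<and> (\<exists>b\<in>S. \<forall>x\<in>S. le b x) \<and> continuous_dcpo S le \<and>
     (\<forall>A. A \<subseteq> S \<longrightarrow> (\<exists>u\<in>S. \<forall>a\<in>A. le a u) \<longrightarrow> (\<exists>s. is_lub S le A s))"

definition domain_basis :: "'d set \<Rightarrow> ('d \<Rightarrow> 'd \<Rightarrow> bool) \<Rightarrow> 'd set \<Rightarrow> bool" where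
  "domain_basis S le B \<longleftrightarrow> B \<subseteq> S \<and>
     (\<forall>x\<in>S. directed_in S le {a\<in>B. way_below S le a x} \<and> is_lub S le {a\<in>B. way_below S le a x} x)"

definition omega_continuous :: "'d set \<Rightarrow> ('d \<Rightarrow> 'd \<Rightarrow> bool) \<Rightarrow> bool" where
  "omega_continuous S le \<longleftrightarrow> dcpo S le \<and> (\<exists>B. countable B \<and> domain_basis S le B)"

definition scott_open :: "'d set \<Rightarrow> ('d \<Rightarrow> 'd \<Rightarrow> bool) \<Rightarrow> 'd set \<Rightarrow> bool" where
  "scott_open S le V \<longleftrightarrow> V \<subseteq> S \<and> (\<forall>x\<in>V. \<forall>y\<in>S. le x y \<longrightarrow> y \<in> V) \<and>
     (\<forall>A s. directed_in S le A \<longrightarrow> is_lub S le A s \<longrightarrow> s \<in> V \<longrightarrow> A \<inter> V \<noteq> {})"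

definition viable_base :: "'a topology \<Rightarrow> 'a set set \<Rightarrow> bool" where
  "viable_base T \<Omega> \<longleftrightarrow> \<Omega> \<subseteq> Collect (openin T) \<and> {} \<in> \<Omega> \<and> topspace T \<in> \<Omega> \<and>
     (\<forall>U\<in>\<Omega>. \<forall>V\<in>\<Omega>. U \<union> V \<in> \<Omega> \<and> U \<inter> V \<in> \<Omega>) \<and>
     (\<forall>U. openin T U \<longrightarrow> (\<exists>\<U>. \<U> \<subseteq> \<Omega> \<and> \<Union>\<U> = U))"

definition ideals :: "'a set set \<Rightarrow> 'a set set set" where
  "ideals \<Omega> = {I. I \<noteq> {} \<and> I \<subseteq> \<Omega> \<and> (\<forall>U\<in>I. \<forall>V\<in>\<Omega>. V \<subseteq> U \<longrightarrow> V \<in> I) \<and>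
                    (\<forall>U\<in>I. \<forall>V\<in>I. \<exists>W\<in>I. U \<subseteq> W \<and> V \<subseteq> W)}"

definition completely_prime_filter :: "'l set \<Rightarrow> ('l \<Rightarrow> 'l \<Rightarrow> bool) \<Rightarrow> 'l set \<Rightarrow> bool" where
  "completely_prime_filter L le F \<longleftrightarrow> F \<subseteq> L \<and> F \<noteq> {} \<and>
     (\<forall>x\<in>F. \<forall>y\<in>L. le x y \<longrightarrow> y \<in> F) \<and>
     (\<forall>x\<in>F. \<forall>y\<in>F. \<forall>m. is_glb L le {x, y} m \<longrightarrow> m \<in> F) \<and>
     (\<forall>A s. A \<subseteq> L \<longrightarrow> is_lub L le A s \<longrightarrow> s \<in> F \<longrightarrow> A \<inter> F \<noteq> {})"

definition Xhat :: "'a set set \<Rightarrow> 'a set set set set" where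
  "Xhat \<Omega> = {F. completely_prime_filter (ideals \<Omega>) (\<subseteq>) F}"

text \<open>The open sets of \<open>X\<^sub>hat\<close> are exactly the sets \<open>Oset \<Omega> I\<close>, \<open>I\<close> an ideal.\<close>
definition Oset :: "'a set set \<Rightarrow> 'a set set \<Rightarrow> 'a set set set set" where
  "Oset \<Omega> I = {y \<in> Xhat \<Omega>. I \<in> y}"

definition downset :: "'a set set \<Rightarrow> 'a set \<Rightarrow> 'a set set" where
  "downset \<Omega> W = {U \<in> \<Omega>. U \<subseteq> W}"

definition cont_fun :: "'a set set \<Rightarrow> 'd set \<Rightarrow> ('d \<Rightarrow> 'd \<Rightarrow> bool) \<Rightarrow> ('a set set set \<Rightarrow> 'd) \<Rightarrow> bool" where
  "cont_fun \<Omega> D le f \<longleftrightarrow> (\<forall>y\<in>Xhat \<Omega>. f y \<in> D) \<and>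
     (\<forall>V. scott_open D le V \<longrightarrow> (\<exists>I\<in>ideals \<Omega>. {y \<in> Xhat \<Omega>. f y \<in> V} = Oset \<Omega> I))"

definition fun_space :: "'a set set \<Rightarrow> 'd set \<Rightarrow> ('d \<Rightarrow> 'd \<Rightarrow> bool) \<Rightarrow> ('a set set set \<Rightarrow> 'd) set" where
  "fun_space \<Omega> D le = {f. f \<in> extensional (Xhat \<Omega>) \<and> cont_fun \<Omega> D le f}"

definition fun_le :: "'a set set \<Rightarrow> ('d \<Rightarrow> 'd \<Rightarrow> bool) \<Rightarrow> ('a set set set \<Rightarrow> 'd) \<Rightarrow> ('a set set set \<Rightarrow> 'd) \<Rightarrow> bool" where
  "fun_le \<Omega> le f g \<longleftrightarrow> (\<forall>y\<in>Xhat \<Omega>. le (f y) (g y))"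

definition step_fun :: "'a set set \<Rightarrow> 'd set \<Rightarrow> ('d \<Rightarrow> 'd \<Rightarrow> bool) \<Rightarrow> 'd \<Rightarrow> 'a set set set set \<Rightarrow> ('a set set set \<Rightarrow> 'd)" where
  "step_fun \<Omega> D le b Ob = (\<lambda>y. if y \<in> Xhat \<Omega> then (if y \<in> Ob then b else dbot D le) else undefined)"

definition consistent_family :: "'a set set \<Rightarrow> 'd set \<Rightarrow> ('d \<Rightarrow> 'd \<Rightarrow> bool) \<Rightarrow> 'i set \<Rightarrow> ('i \<Rightarrow> 'd) \<Rightarrow> ('i \<Rightarrow> 'a set set set set) \<Rightarrow> bool" where
  "consistent_family \<Omega> D le I b Ob \<longleftrightarrow>
     (\<forall>J. J \<subseteq> I \<longrightarrow> {y \<in> Xhat \<Omega>. \<forall>j\<in>J. y \<in> Ob j} \<noteq> {} \<longrightarrow> (\<exists>u\<in>D. \<forall>j\<in>J. le (b j) u))"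

definition step_join :: "'a set set \<Rightarrow> 'd set \<Rightarrow> ('d \<Rightarrow> 'd \<Rightarrow> bool) \<Rightarrow> 'i set \<Rightarrow> ('i \<Rightarrow> 'd) \<Rightarrow> ('i \<Rightarrow> 'a set set set set) \<Rightarrow> ('a set set set \<Rightarrow> 'd)" where
  "step_join \<Omega> D le I b Ob = (\<lambda>y. if y \<in> Xhat \<Omega> then dlub D le ((\<lambda>i. step_fun \<Omega> D le (b i) (Ob i) y) ` I) else undefined)"

definition basis_hat :: "'a set set \<Rightarrow> 'd set \<Rightarrow> ('d \<Rightarrow> 'd \<Rightarrow> bool) \<Rightarrow> 'd set \<Rightarrow> ('a set set set \<Rightarrow> 'd) set" where
  "basis_hat \<Omega> D le D0 =
     {step_join \<Omega> D le I b (\<lambda>i. Oset \<Omega> (downset \<Omega> (W i))) | (I :: nat set) b W.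
        finite I \<and> consistent_family \<Omega> D le I b (\<lambda>i. Oset \<Omega> (downset \<Omega> (W i))) \<and>
        (\<forall>i\<in>I. W i \<in> \<Omega> \<and> b i \<in> D0)}"

end

theory Submission
  imports Defs
begin


context
  fixes S :: "'d set" and le :: "'d \<Rightarrow> 'd \<Rightarrow> bool"
  assumes po: "poset_on S le"
begin

lemma po_refl: "x \<in> S \<Longrightarrow> le x x"
  using po unfolding poset_on_def by blast
lemma po_antisym: "x \<in> S \<Longrightarrow> y \<in> S \<Longrightarrow> le x y \<Longrightarrow> le y x \<Longrightarrow> x = y"
  using po unfolding poset_on_def by blast
lemma po_trans: "le x y \<Longrightarrow> le y z \<Longrightarrow> x \<in> S \<Longrightarrow> y \<in> S \<Longrightarrow> z \<in> S \<Longrightarrow> le x z"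
  using po unfolding poset_on_def by blast

lemma lub_unique: "is_lub S le A s \<Longrightarrow> is_lub S le A t \<Longrightarrow> s = t"
  unfolding is_lub_def using po_antisym by blast

lemma dlub_eq: "is_lub S le A s \<Longrightarrow> dlub S le A = s"
  unfolding dlub_def using lub_unique by blast

lemma lub_single: "x \<in> S \<Longrightarrow> is_lub S le {x} x"
  unfolding is_lub_def using po_refl by auto

lemma directed_single: "x \<in> S \<Longrightarrow> directed_in S le {x}"
  unfolding directed_in_def using po_refl by auto

lemma wb_le: assumes "way_below S le x y" shows "le x y"
proof -
  have y: "y \<in> S" using assms unfolding way_below_def by blast
  have "\<exists>a\<in>{y}. le x a"
    using assms lub_single[OF y] directed_single[OF y] po_refl[OF y] unfolding way_below_def by blast
  thus ?thesis by simp
qed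

lemma wb_in: "way_below S le x y \<Longrightarrow> x \<in> S \<and> y \<in> S"
  unfolding way_below_def by blast

lemma wb_trans_le: assumes "way_below S le x y" "le y z" "z \<in> S" shows "way_below S le x z"
proof -
  have xy: "x \<in> S" "y \<in> S" using assms unfolding way_below_def by auto
  { fix A s assume d: "directed_in S le A" and l: "is_lub S le A s" and zs: "le z s"
    have "s \<in> S" using l unfolding is_lub_def by blast
    hence "le y s" using po_trans[OF assms(2) zs] xy assms(3) by blast
    hence "\<exists>a\<in>A. le x a" using assms(1) d l unfolding way_below_def by blast }
  thus ?thesis using xy assms(3) unfolding way_below_def by blast
qed

lemma le_wb: assumes "x' \<in> S" "le x' x" "way_below S le x y" shows "way_below S le x' y"
proof -
  have xy: "x \<in> S" "y \<in> S" using assms unfolding way_below_def by auto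
  { fix A s assume d: "directed_in S le A" and l: "is_lub S le A s" and ys: "le y s"
    obtain a where a: "a \<in> A" "le x a" using assms(3) d l ys unfolding way_below_def by blast
    have "a \<in> S" using a d unfolding directed_in_def by blast
    hence "\<exists>a\<in>A. le x' a" using a po_trans[OF assms(2) a(2)] assms(1) xy by blast }
  thus ?thesis using xy assms(1) unfolding way_below_def by blast
qed

lemma wb_lub2:
  assumes "way_below S le a1 x" "way_below S le a2 x" "is_lub S le {a1,a2} s"
  shows "way_below S le s x"
proof -
  have s: "s \<in> S" "x \<in> S" using assms unfolding is_lub_def way_below_def by auto
  { fix A t assume d: "directed_in S le A" and l: "is_lub S le A t" and xt: "le x t"
    obtain p1 where p1: "p1 \<in> A" "le a1 p1" using assms(1) d l xt unfolding way_below_def by blast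
    obtain p2 where p2: "p2 \<in> A" "le a2 p2" using assms(2) d l xt unfolding way_below_def by blast
    obtain p3 where p3: "p3 \<in> A" "le p1 p3" "le p2 p3" using d p1 p2 unfolding directed_in_def by blast
    have "p3 \<in> S" "p1 \<in> S" "p2 \<in> S" using p1 p2 p3 d unfolding directed_in_def by auto
    moreover have "a1 \<in> S" "a2 \<in> S" using assms unfolding way_below_def by auto
    ultimately have "le a1 p3" "le a2 p3" using p1 p2 p3 po_trans by blast+
    hence "le s p3" using assms(3) \<open>p3 \<in> S\<close> unfolding is_lub_def by blast
    hence "\<exists>a\<in>A. le s a" using p3 by blast }
  thus ?thesis using s unfolding way_below_def by blast
qed

lemma basis_cont:
  assumes dc: "dcpo S le" and B: "domain_basis S le B"
  shows "continuous_dcpo S le"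
proof -
  have BS: "B \<subseteq> S" using B unfolding domain_basis_def by blast
  { fix x assume x: "x \<in> S"
    let ?A = "{a\<in>B. way_below S le a x}"
    let ?C = "{a\<in>S. way_below S le a x}"
    have dA: "directed_in S le ?A" and lA: "is_lub S le ?A x" using B x unfolding domain_basis_def by auto
    have up: "\<exists>b\<in>?A. le a b" if "a \<in> ?C" for a
    proof -
      have "a \<in> S" "way_below S le a x" using that by auto
      moreover have "le x x" using po_refl x by blast
      ultimately show ?thesis using dA lA unfolding way_below_def by blast
    qed
    have dC: "directed_in S le ?C"
      unfolding directed_in_def
    proof (intro conjI ballI)
      show "?C \<subseteq> S" by blast
      show "?C \<noteq> {}" using dA BS unfolding directed_in_def by blast
      fix a1 a2 assume a: "a1 \<in> ?C" "a2 \<in> ?C"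
      obtain b1 where b1: "b1 \<in> ?A" "le a1 b1" using up a by blast
      obtain b2 where b2: "b2 \<in> ?A" "le a2 b2" using up a by blast
      obtain b3 where b3: "b3 \<in> ?A" "le b1 b3" "le b2 b3" using dA b1 b2 unfolding directed_in_def by blast
      have "le a1 b3" "le a2 b3" using a b1 b2 b3 BS po_trans by blast+
      thus "\<exists>z\<in>?C. le a1 z \<and> le a2 z" using b3 BS by blast
    qed
    have lC: "is_lub S le ?C x"
      unfolding is_lub_def
    proof (intro conjI ballI impI)
      show "x \<in> S" by fact
      show "le a x" if "a \<in> ?C" for a using that wb_le by blast
      fix u assume u: "u \<in> S" "\<forall>a\<in>?C. le a u"
      hence "\<forall>a\<in>?A. le a u" using BS by blast
      thus "le x u" using lA u unfolding is_lub_def by blast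
    qed
    note dC lC }
  thus ?thesis using dc unfolding continuous_dcpo_def by blast
qed

end

context
  fixes S :: "'d set" and le :: "'d \<Rightarrow> 'd \<Rightarrow> bool"
  assumes cd: "continuous_dcpo S le"
begin

lemma cd_po: "poset_on S le" using cd unfolding continuous_dcpo_def dcpo_def by blast

lemma cd_approx: "x \<in> S \<Longrightarrow> directed_in S le {a\<in>S. way_below S le a x} \<and> is_lub S le {a\<in>S. way_below S le a x} x"
  using cd unfolding continuous_dcpo_def by blast

lemma interpolate:
  assumes ax: "way_below S le a x"
  shows "\<exists>c\<in>S. way_below S le a c \<and> way_below S le c x"
proof -
  note po = cd_po
  have x: "x \<in> S" using ax unfolding way_below_def by blast
  let ?B = "{b\<in>S. \<exists>c\<in>S. way_below S le b c \<and> way_below S le c x}"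
  have dX: "directed_in S le {c\<in>S. way_below S le c x}" and lX: "is_lub S le {c\<in>S. way_below S le c x} x"
    using cd_approx x by auto
  have dB: "directed_in S le ?B"
    unfolding directed_in_def
  proof (intro conjI ballI)
    show "?B \<subseteq> S" by blast
    obtain c where c: "c \<in> S" "way_below S le c x" using dX unfolding directed_in_def by blast
    obtain b where "b \<in> S" "way_below S le b c" using cd_approx[OF c(1)] unfolding directed_in_def by blast
    thus "?B \<noteq> {}" using c by blast
    fix b1 b2 assume b: "b1 \<in> ?B" "b2 \<in> ?B"
    then obtain c1 c2 where c12: "c1 \<in> S" "way_below S le b1 c1" "way_below S le c1 x"
      "c2 \<in> S" "way_below S le b2 c2" "way_below S le c2 x" by blast
    obtain c3 where c3: "c3 \<in> S" "way_below S le c3 x" "le c1 c3" "le c2 c3"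
      using dX c12 unfolding directed_in_def by blast
    have "way_below S le b1 c3" "way_below S le b2 c3" using c12 c3 wb_trans_le[OF po] by blast+
    then obtain b3 where b3: "b3 \<in> S" "way_below S le b3 c3" "le b1 b3" "le b2 b3"
      using cd_approx[OF c3(1)] b unfolding directed_in_def by blast
    thus "\<exists>z\<in>?B. le b1 z \<and> le b2 z" using c3 by blast
  qed
  have lB: "is_lub S le ?B x"
    unfolding is_lub_def
  proof (intro conjI ballI impI)
    show "x \<in> S" by fact
    show "le b x" if "b \<in> ?B" for b
    proof -
      from that obtain c where "c \<in> S" "way_below S le b c" "way_below S le c x" by blast
      hence "le b c" "le c x" "b \<in> S" using wb_le[OF po] that by auto
      thus ?thesis using po_trans[OF po] \<open>c \<in> S\<close> x by blast
    qed
    fix u assume u: "u \<in> S" "\<forall>b\<in>?B. le b u"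
    have "le c u" if c: "c \<in> S" "way_below S le c x" for c
    proof -
      have "\<forall>b\<in>{b\<in>S. way_below S le b c}. le b u" using u c by blast
      thus ?thesis using cd_approx[OF c(1)] u unfolding is_lub_def by blast
    qed
    thus "le x u" using lX u unfolding is_lub_def by blast
  qed
  have "le x x" using po_refl[OF po] x by blast
  hence "\<exists>b\<in>?B. le a b" using ax dB lB unfolding way_below_def by blast
  then obtain b where b: "b \<in> ?B" "le a b" by blast
  then obtain c where c: "c \<in> S" "way_below S le b c" "way_below S le c x" by blast
  have "way_below S le a c" using le_wb[OF po] b c ax unfolding way_below_def by blast
  thus ?thesis using c by blast
qed

lemma wb_scott_open: "c \<in> S \<Longrightarrow> scott_open S le {z\<in>S. way_below S le c z}"
  unfolding scott_open_def
proof (intro conjI ballI allI impI)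
  note po = cd_po
  show "{z\<in>S. way_below S le c z} \<subseteq> S" by blast
  show "y \<in> {z\<in>S. way_below S le c z}" if "x \<in> {z\<in>S. way_below S le c z}" "y \<in> S" "le x y" for x y
    using that wb_trans_le[OF po] by blast
  fix A s assume d: "directed_in S le A" and l: "is_lub S le A s" and s: "s \<in> {z\<in>S. way_below S le c z}"
  obtain e where e: "e \<in> S" "way_below S le c e" "way_below S le e s" using interpolate s by blast
  have "s \<in> S" using l unfolding is_lub_def by blast
  hence "le s s" using po_refl[OF po] by blast
  hence "\<exists>a\<in>A. le e a" using e(3) d l unfolding way_below_def by blast
  then obtain a where a: "a \<in> A" "le e a" by blast
  have "a \<in> S" using a d unfolding directed_in_def by blast
  hence "way_below S le c a" using wb_trans_le[OF po] e a by blast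
  thus "A \<inter> {z\<in>S. way_below S le c z} \<noteq> {}" using a \<open>a\<in>S\<close> by blast
qed

end


context
  fixes D :: "'d set" and le :: "'d \<Rightarrow> 'd \<Rightarrow> bool"
  assumes bc: "bc_domain D le"
begin

lemma bc_dcpo: "dcpo D le" using bc unfolding bc_domain_def by blast
lemma bc_po: "poset_on D le" using bc_dcpo unfolding dcpo_def by blast
lemma bc_cd: "continuous_dcpo D le" using bc unfolding bc_domain_def by blast

lemma bc_bot: "dbot D le \<in> D \<and> (\<forall>x\<in>D. le (dbot D le) x)"
proof -
  obtain b where b: "b \<in> D" "\<forall>x\<in>D. le b x" using bc unfolding bc_domain_def by blast
  have "\<exists>!b. b \<in> D \<and> (\<forall>x\<in>D. le b x)"
    using b po_antisym[OF bc_po] by blast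
  thus ?thesis unfolding dbot_def by (rule theI')
qed

lemma bc_bounded_lub:
  assumes "A \<subseteq> D" "u \<in> D" "\<forall>a\<in>A. le a u"
  shows "is_lub D le A (dlub D le A)"
proof -
  obtain s where "is_lub D le A s" using bc assms unfolding bc_domain_def by blast
  thus ?thesis using dlub_eq[OF bc_po] by simp
qed

lemma bc_directed_lub:
  assumes "directed_in D le A"
  shows "is_lub D le A (dlub D le A)"
proof -
  obtain s where "is_lub D le A s" using bc_dcpo assms unfolding dcpo_def by blast
  thus ?thesis using dlub_eq[OF bc_po] by simp
qed

lemma bc_lub_empty: "is_lub D le {} (dbot D le)"
  using bc_bot unfolding is_lub_def by blast

lemma bc_bot_wb: assumes "y \<in> D" shows "way_below D le (dbot D le) y"
proof -
  { fix A s assume "directed_in D le A"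
    then obtain a where "a \<in> A" "a \<in> D" unfolding directed_in_def by blast
    hence "\<exists>a\<in>A. le (dbot D le) a" using bc_bot by blast }
  thus ?thesis using assms bc_bot unfolding way_below_def by blast
qed

end


definition jn :: "'a set set \<Rightarrow> 'a set set set \<Rightarrow> 'a set set" where
  "jn \<Omega> A = {V\<in>\<Omega>. \<exists>F. finite F \<and> F \<subseteq> \<Union>A \<and> V \<subseteq> \<Union>F}"

definition xopen :: "'a set set \<Rightarrow> 'a set set set set \<Rightarrow> bool" where
  "xopen \<Omega> S \<longleftrightarrow> (\<exists>I\<in>ideals \<Omega>. S = Oset \<Omega> I)"

lemma idealsI:
  assumes "I \<noteq> {}" "I \<subseteq> \<Omega>" "\<And>U V. U\<in>I \<Longrightarrow> V\<in>\<Omega> \<Longrightarrow> V\<subseteq>U \<Longrightarrow> V\<in>I"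
    "\<And>U V. U\<in>I \<Longrightarrow> V\<in>I \<Longrightarrow> \<exists>W\<in>I. U\<subseteq>W \<and> V\<subseteq>W"
  shows "I \<in> ideals \<Omega>"
  using assms unfolding ideals_def by blast

lemma idealsD:
  assumes "I \<in> ideals \<Omega>"
  shows "I \<noteq> {}" "I \<subseteq> \<Omega>" "\<And>U V. U\<in>I \<Longrightarrow> V\<in>\<Omega> \<Longrightarrow> V\<subseteq>U \<Longrightarrow> V\<in>I"
    "\<And>U V. U\<in>I \<Longrightarrow> V\<in>I \<Longrightarrow> \<exists>W\<in>I. U\<subseteq>W \<and> V\<subseteq>W"
  using assms unfolding ideals_def mem_Collect_eq by simp_all

lemma ideals_po: "poset_on (ideals \<Omega>) (\<subseteq>)"
  unfolding poset_on_def by auto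

lemma Xhat_cpf: "y \<in> Xhat \<Omega> \<longleftrightarrow> completely_prime_filter (ideals \<Omega>) (\<subseteq>) y"
  unfolding Xhat_def by simp

lemma XhatD:
  assumes "y \<in> Xhat \<Omega>"
  shows "y \<subseteq> ideals \<Omega>" "y \<noteq> {}" "\<And>I J. I \<in> y \<Longrightarrow> J \<in> ideals \<Omega> \<Longrightarrow> I \<subseteq> J \<Longrightarrow> J \<in> y"
    "\<And>I J m. I \<in> y \<Longrightarrow> J \<in> y \<Longrightarrow> is_glb (ideals \<Omega>) (\<subseteq>) {I, J} m \<Longrightarrow> m \<in> y"
    "\<And>A s. A \<subseteq> ideals \<Omega> \<Longrightarrow> is_lub (ideals \<Omega>) (\<subseteq>) A s \<Longrightarrow> s \<in> y \<Longrightarrow> A \<inter> y \<noteq> {}"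
proof -
  have H: "y \<subseteq> ideals \<Omega> \<and> y \<noteq> {} \<and> (\<forall>x\<in>y. \<forall>z\<in>ideals \<Omega>. x \<subseteq> z \<longrightarrow> z \<in> y) \<and>
    (\<forall>x\<in>y. \<forall>z\<in>y. \<forall>m. is_glb (ideals \<Omega>) (\<subseteq>) {x, z} m \<longrightarrow> m \<in> y) \<and>
    (\<forall>A s. A \<subseteq> ideals \<Omega> \<longrightarrow> is_lub (ideals \<Omega>) (\<subseteq>) A s \<longrightarrow> s \<in> y \<longrightarrow> A \<inter> y \<noteq> {})"
    using assms unfolding Xhat_def completely_prime_filter_def mem_Collect_eq by assumption
  show "y \<subseteq> ideals \<Omega>" using H[THEN conjunct1] .
  show "y \<noteq> {}" using H[THEN conjunct2, THEN conjunct1] .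
  show "\<And>I J. I \<in> y \<Longrightarrow> J \<in> ideals \<Omega> \<Longrightarrow> I \<subseteq> J \<Longrightarrow> J \<in> y" using H[THEN conjunct2, THEN conjunct2, THEN conjunct1] by blast
  show "\<And>I J m. I \<in> y \<Longrightarrow> J \<in> y \<Longrightarrow> is_glb (ideals \<Omega>) (\<subseteq>) {I, J} m \<Longrightarrow> m \<in> y" using H[THEN conjunct2, THEN conjunct2, THEN conjunct2, THEN conjunct1] by blast
  show "\<And>A s. A \<subseteq> ideals \<Omega> \<Longrightarrow> is_lub (ideals \<Omega>) (\<subseteq>) A s \<Longrightarrow> s \<in> y \<Longrightarrow> A \<inter> y \<noteq> {}" using H[THEN conjunct2, THEN conjunct2, THEN conjunct2, THEN conjunct2] by blast
qed

lemma XhatI: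
  assumes "y \<subseteq> ideals \<Omega>" "y \<noteq> {}" "\<And>I J. I \<in> y \<Longrightarrow> J \<in> ideals \<Omega> \<Longrightarrow> I \<subseteq> J \<Longrightarrow> J \<in> y"
    "\<And>I J m. I \<in> y \<Longrightarrow> J \<in> y \<Longrightarrow> is_glb (ideals \<Omega>) (\<subseteq>) {I, J} m \<Longrightarrow> m \<in> y"
    "\<And>A s. A \<subseteq> ideals \<Omega> \<Longrightarrow> is_lub (ideals \<Omega>) (\<subseteq>) A s \<Longrightarrow> s \<in> y \<Longrightarrow> A \<inter> y \<noteq> {}"
  shows "y \<in> Xhat \<Omega>"
  unfolding Xhat_def completely_prime_filter_def mem_Collect_eq
  apply (intro conjI)
      apply (rule assms(1))
     apply (rule assms(2))
  using assms(3) apply blast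
  using assms(4) apply blast
  using assms(5) apply blast
  done

lemma Oset_sub: "Oset \<Omega> I \<subseteq> Xhat \<Omega>" unfolding Oset_def by blast

context
  fixes \<Omega> :: "'a set set"
  assumes e: "{} \<in> \<Omega>" and un: "\<And>U V. U\<in>\<Omega> \<Longrightarrow> V\<in>\<Omega> \<Longrightarrow> U\<union>V\<in>\<Omega>"
    and int: "\<And>U V. U\<in>\<Omega> \<Longrightarrow> V\<in>\<Omega> \<Longrightarrow> U\<inter>V\<in>\<Omega>"
begin

lemma Union_fin: "finite F \<Longrightarrow> F \<subseteq> \<Omega> \<Longrightarrow> \<Union>F \<in> \<Omega>"
  by (induction F rule: finite_induct) (auto simp: e un)

lemma ideal_empty: "I \<in> ideals \<Omega> \<Longrightarrow> {} \<in> I"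
proof -
  assume I: "I \<in> ideals \<Omega>"
  then obtain U where "U \<in> I" using idealsD(1) by blast
  thus ?thesis using idealsD(3)[OF I] e by blast
qed

lemma ideal_un: assumes I: "I \<in> ideals \<Omega>" and "U \<in> I" "V \<in> I" shows "U \<union> V \<in> I"
proof -
  obtain W where W: "W \<in> I" "U \<subseteq> W" "V \<subseteq> W" using idealsD(4)[OF I] assms by blast
  have "U \<in> \<Omega>" "V \<in> \<Omega>" using idealsD(2)[OF I] assms by auto
  thus ?thesis using idealsD(3)[OF I W(1)] un W by blast
qed

lemma ideal_Union_fin: "finite F \<Longrightarrow> I \<in> ideals \<Omega> \<Longrightarrow> F \<subseteq> I \<Longrightarrow> \<Union>F \<in> I"
  by (induction F rule: finite_induct) (auto simp: ideal_empty ideal_un)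

lemma Omega_ideal: "\<Omega> \<in> ideals \<Omega>"
  by (rule idealsI) (use e un in blast)+

lemma bot_ideal: "{{}} \<in> ideals \<Omega>"
  by (rule idealsI) (use e in blast)+

lemma downset_ideal: "W \<in> \<Omega> \<Longrightarrow> downset \<Omega> W \<in> ideals \<Omega>"
  unfolding downset_def by (rule idealsI) (use e un in blast)+

lemma inter_ideal: assumes I: "I \<in> ideals \<Omega>" and J: "J \<in> ideals \<Omega>" shows "I \<inter> J \<in> ideals \<Omega>"
proof (rule idealsI)
  show "I \<inter> J \<noteq> {}" using ideal_empty I J by blast
  show "I \<inter> J \<subseteq> \<Omega>" using idealsD(2)[OF I] by blast
  show "V \<in> I \<inter> J" if "U \<in> I \<inter> J" "V \<in> \<Omega>" "V \<subseteq> U" for U V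
    using that idealsD(3)[OF I] idealsD(3)[OF J] by blast
  show "\<exists>W\<in>I \<inter> J. U \<subseteq> W \<and> V \<subseteq> W" if "U \<in> I \<inter> J" "V \<in> I \<inter> J" for U V
    using that ideal_un[OF I] ideal_un[OF J] by blast
qed

lemma jn_ideal: assumes A: "A \<subseteq> ideals \<Omega>" shows "jn \<Omega> A \<in> ideals \<Omega>"
proof (rule idealsI)
  have "{} \<in> jn \<Omega> A" unfolding jn_def using e by blast
  thus "jn \<Omega> A \<noteq> {}" by blast
next
  show "jn \<Omega> A \<subseteq> \<Omega>" unfolding jn_def by blast
next
  fix U V assume "U \<in> jn \<Omega> A" "V \<in> \<Omega>" "V \<subseteq> U"
  thus "V \<in> jn \<Omega> A" unfolding jn_def by blast
next
  fix U V assume U: "U \<in> jn \<Omega> A" and V: "V \<in> jn \<Omega> A"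
  then obtain F G where F: "finite F" "F \<subseteq> \<Union>A" "U \<subseteq> \<Union>F" and G: "finite G" "G \<subseteq> \<Union>A" "V \<subseteq> \<Union>G"
    unfolding jn_def by blast
  have "\<Union>A \<subseteq> \<Omega>" using A idealsD(2) by blast
  hence sub: "F \<union> G \<subseteq> \<Omega>" using F G by blast
  have fin: "finite (F \<union> G)" using F G by simp
  have om: "\<Union>(F \<union> G) \<in> \<Omega>" by (rule Union_fin[OF fin sub])
  have sub2: "F \<union> G \<subseteq> \<Union>A" using F G by blast
  have "\<exists>F'. finite F' \<and> F' \<subseteq> \<Union>A \<and> \<Union>(F \<union> G) \<subseteq> \<Union>F'"
    using fin sub2 by (intro exI[of _ "F \<union> G"]) simp
  hence mem: "\<Union>(F \<union> G) \<in> jn \<Omega> A" unfolding jn_def using om by simp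
  have "U \<subseteq> \<Union>(F \<union> G)" "V \<subseteq> \<Union>(F \<union> G)" using F(3) G(3) by auto
  thus "\<exists>W\<in>jn \<Omega> A. U \<subseteq> W \<and> V \<subseteq> W" using mem by blast
qed

lemma jn_lub: assumes A: "A \<subseteq> ideals \<Omega>" shows "is_lub (ideals \<Omega>) (\<subseteq>) A (jn \<Omega> A)"
  unfolding is_lub_def
proof (intro conjI ballI impI)
  show "jn \<Omega> A \<in> ideals \<Omega>" using jn_ideal[OF A] .
  show "I \<subseteq> jn \<Omega> A" if "I \<in> A" for I
  proof
    fix U assume "U \<in> I"
    moreover have "U \<in> \<Omega>" using \<open>U \<in> I\<close> that A idealsD(2) by blast
    moreover have "finite {U} \<and> {U} \<subseteq> \<Union>A \<and> U \<subseteq> \<Union>{U}" using that \<open>U \<in> I\<close> by blast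
    ultimately show "U \<in> jn \<Omega> A" unfolding jn_def by blast
  qed
  fix K assume K: "K \<in> ideals \<Omega>" "\<forall>I\<in>A. I \<subseteq> K"
  show "jn \<Omega> A \<subseteq> K"
  proof
    fix V assume "V \<in> jn \<Omega> A"
    then obtain F where F: "finite F" "F \<subseteq> \<Union>A" "V \<subseteq> \<Union>F" "V \<in> \<Omega>" unfolding jn_def by blast
    have "F \<subseteq> K" using F K by blast
    hence "\<Union>F \<in> K" using ideal_Union_fin F K by blast
    thus "V \<in> K" using idealsD(3)[OF K(1)] F by blast
  qed
qed

lemma lub_is_jn: "A \<subseteq> ideals \<Omega> \<Longrightarrow> is_lub (ideals \<Omega>) (\<subseteq>) A s \<Longrightarrow> s = jn \<Omega> A"
  using lub_unique[OF ideals_po] jn_lub by blast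

lemma glb_inter: assumes "I \<in> ideals \<Omega>" "J \<in> ideals \<Omega>" shows "is_glb (ideals \<Omega>) (\<subseteq>) {I, J} (I \<inter> J)"
  unfolding is_glb_def using inter_ideal[OF assms] by blast

lemma Xhat_up: "y \<in> Xhat \<Omega> \<Longrightarrow> I \<in> y \<Longrightarrow> J \<in> ideals \<Omega> \<Longrightarrow> I \<subseteq> J \<Longrightarrow> J \<in> y"
  using XhatD(3) by blast

lemma Xhat_ideal: "y \<in> Xhat \<Omega> \<Longrightarrow> I \<in> y \<Longrightarrow> I \<in> ideals \<Omega>"
  using XhatD(1) by blast

lemma Xhat_inter: assumes y: "y \<in> Xhat \<Omega>" and "I \<in> y" "J \<in> y" shows "I \<inter> J \<in> y"
  using XhatD(4)[OF y assms(2,3) glb_inter] Xhat_ideal[OF y] assms by blast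

lemma Xhat_Omega: assumes y: "y \<in> Xhat \<Omega>" shows "\<Omega> \<in> y"
proof -
  obtain I where "I \<in> y" using XhatD(2)[OF y] by blast
  moreover have "I \<subseteq> \<Omega>" using idealsD(2) Xhat_ideal[OF y \<open>I \<in> y\<close>] by blast
  ultimately show ?thesis using Xhat_up[OF y _ Omega_ideal] by blast
qed

lemma Xhat_lub: assumes y: "y \<in> Xhat \<Omega>" and A: "A \<subseteq> ideals \<Omega>" and l: "is_lub (ideals \<Omega>) (\<subseteq>) A s" and s: "s \<in> y"
  shows "\<exists>I\<in>A. I \<in> y"
  using XhatD(5)[OF y A l s] by blast

lemma Oset_Omega: "Oset \<Omega> \<Omega> = Xhat \<Omega>"
  unfolding Oset_def using Xhat_Omega by blast

lemma Oset_bot: "Oset \<Omega> {{}} = {}"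
proof -
  have "is_lub (ideals \<Omega>) (\<subseteq>) {} {{}}" unfolding is_lub_def using bot_ideal ideal_empty by blast
  thus ?thesis unfolding Oset_def using Xhat_lub by blast
qed

lemma xopen_Xhat: "xopen \<Omega> (Xhat \<Omega>)"
  unfolding xopen_def using Oset_Omega Omega_ideal by metis

lemma xopen_empty: "xopen \<Omega> {}"
  unfolding xopen_def using Oset_bot bot_ideal by metis

lemma xopen_sub: "xopen \<Omega> S \<Longrightarrow> S \<subseteq> Xhat \<Omega>"
  unfolding xopen_def using Oset_sub by blast

lemma xopen_Oset: "I \<in> ideals \<Omega> \<Longrightarrow> xopen \<Omega> (Oset \<Omega> I)"
  unfolding xopen_def by blast

lemma xopen_int: assumes "xopen \<Omega> S" "xopen \<Omega> T" shows "xopen \<Omega> (S \<inter> T)"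
proof -
  obtain I J where IJ: "I \<in> ideals \<Omega>" "J \<in> ideals \<Omega>" "S = Oset \<Omega> I" "T = Oset \<Omega> J"
    using assms unfolding xopen_def by blast
  have "S \<inter> T = Oset \<Omega> (I \<inter> J)"
    unfolding IJ Oset_def using Xhat_inter Xhat_up inter_ideal[OF IJ(1,2)] IJ(1,2)
    by (auto; meson Int_lower1 Int_lower2)
  thus ?thesis using inter_ideal[OF IJ(1,2)] unfolding xopen_def by blast
qed

lemma xopen_Union: assumes "\<forall>S\<in>\<S>. xopen \<Omega> S" shows "xopen \<Omega> (\<Union>\<S>)"
proof -
  define A where "A = {I\<in>ideals \<Omega>. Oset \<Omega> I \<in> \<S>}"
  have A: "A \<subseteq> ideals \<Omega>" unfolding A_def by blast
  have "\<Union>\<S> = Oset \<Omega> (jn \<Omega> A)"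
  proof (intro equalityI subsetI)
    fix y assume "y \<in> \<Union>\<S>"
    then obtain S where S: "S \<in> \<S>" "y \<in> S" by blast
    then obtain I where I: "I \<in> ideals \<Omega>" "S = Oset \<Omega> I" using assms unfolding xopen_def by blast
    hence "I \<in> A" "I \<in> y" "y \<in> Xhat \<Omega>" using S unfolding A_def Oset_def by auto
    moreover have "I \<subseteq> jn \<Omega> A" using jn_lub[OF A] \<open>I \<in> A\<close> unfolding is_lub_def by blast
    ultimately show "y \<in> Oset \<Omega> (jn \<Omega> A)" unfolding Oset_def using Xhat_up jn_ideal[OF A] by blast
  next
    fix y assume "y \<in> Oset \<Omega> (jn \<Omega> A)"
    hence y: "y \<in> Xhat \<Omega>" "jn \<Omega> A \<in> y" unfolding Oset_def by auto
    then obtain I where "I \<in> A" "I \<in> y" using Xhat_lub[OF y(1) A jn_lub[OF A]] by blast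
    thus "y \<in> \<Union>\<S>" unfolding A_def Oset_def using y by blast
  qed
  thus ?thesis using jn_ideal[OF A] unfolding xopen_def by blast
qed

lemma xopen_local:
  assumes "S \<subseteq> Xhat \<Omega>" "\<forall>y\<in>S. \<exists>U. xopen \<Omega> U \<and> y \<in> U \<and> U \<subseteq> S"
  shows "xopen \<Omega> S"
proof -
  have "S = \<Union>{U. xopen \<Omega> U \<and> U \<subseteq> S}" using assms by blast
  thus ?thesis using xopen_Union[of "{U. xopen \<Omega> U \<and> U \<subseteq> S}"] by auto
qed

lemma xopen_fin_int:
  "finite C \<Longrightarrow> (\<forall>c\<in>C. xopen \<Omega> (P c)) \<Longrightarrow> xopen \<Omega> {y\<in>Xhat \<Omega>. \<forall>c\<in>C. y \<in> P c}"
proof (induction C rule: finite_induct)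
  case empty
  then show ?case using xopen_Xhat by simp
next
  case (insert x F)
  have "{y\<in>Xhat \<Omega>. \<forall>c\<in>insert x F. y \<in> P c} = P x \<inter> {y\<in>Xhat \<Omega>. \<forall>c\<in>F. y \<in> P c}" 
    using xopen_sub insert.prems by auto
  then show ?case using xopen_int insert by simp
qed

lemma ideal_lub_downsets: assumes I: "I \<in> ideals \<Omega>"
  shows "is_lub (ideals \<Omega>) (\<subseteq>) (downset \<Omega> ` I) I"
  unfolding is_lub_def
proof (intro conjI ballI impI)
  show "I \<in> ideals \<Omega>" by fact
  show "J \<subseteq> I" if "J \<in> downset \<Omega> ` I" for J
    using that idealsD(3)[OF I] unfolding downset_def by blast
  fix K assume K: "K \<in> ideals \<Omega>" "\<forall>J\<in>downset \<Omega> ` I. J \<subseteq> K"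
  show "I \<subseteq> K"
  proof
    fix W assume "W \<in> I"
    hence "W \<in> downset \<Omega> W" "W \<in> \<Omega>" using idealsD(2)[OF I] unfolding downset_def by auto
    thus "W \<in> K" using K \<open>W \<in> I\<close> by blast
  qed
qed

lemma Oset_downset_base:
  assumes I: "I \<in> ideals \<Omega>" and y: "y \<in> Oset \<Omega> I"
  shows "\<exists>W\<in>I. y \<in> Oset \<Omega> (downset \<Omega> W)"
proof -
  have y': "y \<in> Xhat \<Omega>" "I \<in> y" using y unfolding Oset_def by auto
  have "downset \<Omega> ` I \<subseteq> ideals \<Omega>" using downset_ideal idealsD(2)[OF I] by blast
  then obtain J where "J \<in> downset \<Omega> ` I" "J \<in> y" using Xhat_lub[OF y'(1) _ ideal_lub_downsets[OF I] y'(2)] by blast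
  thus ?thesis using y' unfolding Oset_def by blast
qed

lemma Oset_mono: "y \<in> Oset \<Omega> I \<Longrightarrow> I \<subseteq> J \<Longrightarrow> J \<in> ideals \<Omega> \<Longrightarrow> y \<in> Oset \<Omega> J"
  unfolding Oset_def using Xhat_up by blast

end


context
  fixes \<Omega> :: "'a set set"
  assumes e: "{} \<in> \<Omega>" and un: "\<And>U V. U\<in>\<Omega> \<Longrightarrow> V\<in>\<Omega> \<Longrightarrow> U\<union>V\<in>\<Omega>"
    and int: "\<And>U V. U\<in>\<Omega> \<Longrightarrow> V\<in>\<Omega> \<Longrightarrow> U\<inter>V\<in>\<Omega>"
begin

lemma dir_union_ideal:
  assumes K: "\<K> \<subseteq> ideals \<Omega>" "\<K> \<noteq> {}" and d: "\<And>I J. I\<in>\<K> \<Longrightarrow> J\<in>\<K> \<Longrightarrow> \<exists>L\<in>\<K>. I\<subseteq>L \<and> J\<subseteq>L"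
  shows "\<Union>\<K> \<in> ideals \<Omega>"
proof (rule idealsI)
  obtain I where I: "I \<in> \<K>" using K by blast
  hence "{} \<in> I" using ideal_empty[OF e un int] K by blast
  thus "\<Union>\<K> \<noteq> {}" using I by blast
  show "\<Union>\<K> \<subseteq> \<Omega>" using K idealsD(2) by blast
  show "V \<in> \<Union>\<K>" if h: "U \<in> \<Union>\<K>" "V \<in> \<Omega>" "V \<subseteq> U" for U V
  proof -
    obtain I where "I \<in> \<K>" "U \<in> I" using h by blast
    thus ?thesis using idealsD(3)[of I \<Omega> U V] K h by blast
  qed
  show "\<exists>W\<in>\<Union>\<K>. U \<subseteq> W \<and> V \<subseteq> W" if h: "U \<in> \<Union>\<K>" "V \<in> \<Union>\<K>" for U V
  proof -
    obtain I J where IJ: "I \<in> \<K>" "U \<in> I" "J \<in> \<K>" "V \<in> J" using h by blast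
    then obtain L where L: "L \<in> \<K>" "I \<subseteq> L" "J \<subseteq> L" using d by blast
    hence "L \<in> ideals \<Omega>" "U \<in> L" "V \<in> L" using K IJ by auto
    then obtain W where "W \<in> L" "U \<subseteq> W" "V \<subseteq> W" using idealsD(4) by blast
    thus ?thesis using L by blast
  qed
qed

lemma union_lub: "\<K> \<subseteq> ideals \<Omega> \<Longrightarrow> \<Union>\<K> \<in> ideals \<Omega> \<Longrightarrow> is_lub (ideals \<Omega>) (\<subseteq>) \<K> (\<Union>\<K>)"
  unfolding is_lub_def by (intro conjI ballI impI; blast)

lemma ext_ideal:
  assumes M: "M \<in> ideals \<Omega>" and U: "U \<in> \<Omega>"
  shows "{X\<in>\<Omega>. \<exists>m\<in>M. X \<subseteq> m \<union> U} \<in> ideals \<Omega>"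
proof (rule idealsI)
  have "{} \<in> M" using ideal_empty[OF e un int M] .
  hence "{} \<in> {X\<in>\<Omega>. \<exists>m\<in>M. X \<subseteq> m \<union> U}" using e by auto
  thus "{X\<in>\<Omega>. \<exists>m\<in>M. X \<subseteq> m \<union> U} \<noteq> {}" by auto
  show "{X\<in>\<Omega>. \<exists>m\<in>M. X \<subseteq> m \<union> U} \<subseteq> \<Omega>" by blast
  show "V \<in> {X\<in>\<Omega>. \<exists>m\<in>M. X \<subseteq> m \<union> U}" if h: "Y \<in> {X\<in>\<Omega>. \<exists>m\<in>M. X \<subseteq> m \<union> U}" "V \<in> \<Omega>" "V \<subseteq> Y" for Y V
  proof -
    obtain m where "m \<in> M" "Y \<subseteq> m \<union> U" using h(1) by auto
    hence "V \<subseteq> m \<union> U" using h(3) by auto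
    thus ?thesis using h(2) \<open>m \<in> M\<close> by auto
  qed
  show "\<exists>W\<in>{X\<in>\<Omega>. \<exists>m\<in>M. X \<subseteq> m \<union> U}. Y \<subseteq> W \<and> V \<subseteq> W"
    if h: "Y \<in> {X\<in>\<Omega>. \<exists>m\<in>M. X \<subseteq> m \<union> U}" "V \<in> {X\<in>\<Omega>. \<exists>m\<in>M. X \<subseteq> m \<union> U}" for Y V
  proof -
    obtain m1 where m1: "m1 \<in> M" "Y \<subseteq> m1 \<union> U" "Y \<in> \<Omega>" using h(1) by auto
    obtain m2 where m2: "m2 \<in> M" "V \<subseteq> m2 \<union> U" "V \<in> \<Omega>" using h(2) by auto
    note m = m1 m2
    obtain m3 where m3: "m3 \<in> M" "m1 \<subseteq> m3" "m2 \<subseteq> m3" using idealsD(4)[OF M m1(1) m2(1)] by blast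
    have "Y \<union> V \<in> \<Omega>" using un m1(3) m2(3) by blast
    moreover have "Y \<union> V \<subseteq> m3 \<union> U" using m m3 by auto
    ultimately have "Y \<union> V \<in> {X\<in>\<Omega>. \<exists>m\<in>M. X \<subseteq> m \<union> U}" using m3(1) by auto
    moreover have "Y \<subseteq> Y \<union> V" "V \<subseteq> Y \<union> V" by auto
    ultimately show ?thesis by blast
  qed
qed

lemma glb_is_inter:
  assumes "I \<in> ideals \<Omega>" "J \<in> ideals \<Omega>" "is_glb (ideals \<Omega>) (\<subseteq>) {I, J} m"
  shows "m = I \<inter> J"
proof -
  have g: "is_glb (ideals \<Omega>) (\<subseteq>) {I, J} (I \<inter> J)" using glb_inter[OF e un int assms(1,2)] .
  have h: "m \<in> ideals \<Omega>" "\<forall>a\<in>{I,J}. m \<subseteq> a" "\<forall>u\<in>ideals \<Omega>. (\<forall>a\<in>{I,J}. u \<subseteq> a) \<longrightarrow> u \<subseteq> m"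
    using assms(3) unfolding is_glb_def by auto
  have "m \<subseteq> I \<inter> J" using h(2) by auto
  moreover have "I \<inter> J \<in> ideals \<Omega>" using inter_ideal[OF e un int assms(1,2)] .
  moreover have "I \<inter> J \<subseteq> m" using h(3) calculation(2) by auto
  ultimately show ?thesis by blast
qed

lemma separate:
  assumes W: "W \<in> \<Omega>" and K: "K \<in> ideals \<Omega>" and nW: "W \<notin> K"
  shows "\<exists>z\<in>Xhat \<Omega>. downset \<Omega> W \<in> z \<and> K \<notin> z"
proof -
  define \<A> where "\<A> = {M \<in> ideals \<Omega>. K \<subseteq> M \<and> W \<notin> M}"
  have KA: "K \<in> \<A>" unfolding \<A>_def using K nW by blast
  have "\<forall>C\<in>chains \<A>. \<exists>U\<in>\<A>. \<forall>X\<in>C. X \<subseteq> U"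
  proof
    fix C assume C: "C \<in> chains \<A>"
    hence CA: "C \<subseteq> \<A>" using chainsD2 by blast
    show "\<exists>U\<in>\<A>. \<forall>X\<in>C. X \<subseteq> U"
    proof (cases "C = {}")
      case True thus ?thesis using KA by blast
    next
      case False
      have "C \<subseteq> ideals \<Omega>" using CA unfolding \<A>_def by blast
      moreover have "\<exists>L\<in>C. I \<subseteq> L \<and> J \<subseteq> L" if "I \<in> C" "J \<in> C" for I J
        using chainsD[OF C that] that by blast
      ultimately have "\<Union>C \<in> ideals \<Omega>" using dir_union_ideal False by blast
      moreover have "K \<subseteq> \<Union>C" "W \<notin> \<Union>C" using False CA unfolding \<A>_def by blast+
      ultimately have "\<Union>C \<in> \<A>" unfolding \<A>_def by blast
      thus ?thesis by blast
    qed
  qed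
  then obtain M where MA: "M \<in> \<A>" and max: "\<forall>X\<in>\<A>. M \<subseteq> X \<longrightarrow> X = M"
    using Zorn_Lemma2[of \<A>] by blast
  have M: "M \<in> ideals \<Omega>" "K \<subseteq> M" "W \<notin> M" using MA unfolding \<A>_def by auto
  have ext: "\<exists>m\<in>M. W \<subseteq> m \<union> U" if U: "U \<in> \<Omega>" "U \<notin> M" for U
  proof (rule ccontr)
    assume nex: "\<not> (\<exists>m\<in>M. W \<subseteq> m \<union> U)"
    define MU where "MU = {X\<in>\<Omega>. \<exists>m\<in>M. X \<subseteq> m \<union> U}"
    have MUi: "MU \<in> ideals \<Omega>" unfolding MU_def using ext_ideal[OF M(1) U(1)] .
    have MMU: "M \<subseteq> MU" unfolding MU_def using idealsD(2)[OF M(1)] by blast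
    have "W \<notin> MU" unfolding MU_def using nex by blast
    hence "MU \<in> \<A>" unfolding \<A>_def using MUi MMU M by blast
    hence "MU = M" using max MMU by blast
    moreover have "U \<in> MU" unfolding MU_def using U ideal_empty[OF e un int M(1)] by blast
    ultimately show False using U by blast
  qed
  have prime: "U \<in> M \<or> V \<in> M" if UV: "U \<in> \<Omega>" "V \<in> \<Omega>" "U \<inter> V \<in> M" for U V
  proof (rule ccontr)
    assume "\<not> (U \<in> M \<or> V \<in> M)"
    hence "U \<notin> M" "V \<notin> M" by auto
    then obtain m1 m2 where m: "m1 \<in> M" "W \<subseteq> m1 \<union> U" "m2 \<in> M" "W \<subseteq> m2 \<union> V" using ext[of U] ext[of V] UV by auto
    obtain m3 where m3: "m3 \<in> M" "m1 \<subseteq> m3" "m2 \<subseteq> m3" using idealsD(4)[OF M(1) m(1) m(3)] by blast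
    have "m3 \<union> (U \<inter> V) \<in> M" using ideal_un[OF e un int M(1) m3(1) UV(3)] .
    moreover have "W \<subseteq> m3 \<union> (U \<inter> V)" using m m3 by auto
    ultimately have "W \<in> M" using idealsD(3)[OF M(1)] W by blast
    thus False using M by blast
  qed
  define z where "z = {I \<in> ideals \<Omega>. \<not> I \<subseteq> M}"
  have dW: "downset \<Omega> W \<in> ideals \<Omega>" using downset_ideal[OF e un int W] .
  have "z \<in> Xhat \<Omega>"
  proof (rule XhatI)
    show "z \<subseteq> ideals \<Omega>" unfolding z_def by blast
    have "W \<in> downset \<Omega> W" unfolding downset_def using W by blast
    hence "downset \<Omega> W \<in> z" unfolding z_def using dW M by blast
    thus "z \<noteq> {}" by blast
    show "J \<in> z" if "I \<in> z" "J \<in> ideals \<Omega>" "I \<subseteq> J" for I J using that unfolding z_def by blast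
    show "m \<in> z" if h: "I \<in> z" "J \<in> z" "is_glb (ideals \<Omega>) (\<subseteq>) {I, J} m" for I J m
    proof -
      have IJ: "I \<in> ideals \<Omega>" "J \<in> ideals \<Omega>" using h unfolding z_def by auto
      have mIJ: "m = I \<inter> J" using glb_is_inter[OF IJ h(3)] .
      obtain U1 where U1: "U1 \<in> I" "U1 \<notin> M" using h(1) unfolding z_def by auto
      obtain U2 where U2: "U2 \<in> J" "U2 \<notin> M" using h(2) unfolding z_def by auto
      note U = U1 U2
      have UO: "U1 \<in> \<Omega>" "U2 \<in> \<Omega>" using U IJ idealsD(2) by blast+
      hence "U1 \<inter> U2 \<in> \<Omega>" using int by blast
      hence "U1 \<inter> U2 \<in> I \<inter> J" using idealsD(3)[OF IJ(1) U(1)] idealsD(3)[OF IJ(2) U(3)] by blast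
      moreover have "U1 \<inter> U2 \<notin> M" using prime UO U by blast
      moreover have "I \<inter> J \<in> ideals \<Omega>" using inter_ideal[OF e un int IJ] .
      ultimately show ?thesis unfolding z_def mIJ by blast
    qed
    show "A \<inter> z \<noteq> {}" if A: "A \<subseteq> ideals \<Omega>" and l: "is_lub (ideals \<Omega>) (\<subseteq>) A s" and s: "s \<in> z" for A s
    proof -
      have sj: "s = jn \<Omega> A" using lub_is_jn[OF e un int A l] .
      obtain V where V: "V \<in> s" "V \<notin> M" using s unfolding z_def by blast
      then obtain F where F: "finite F" "F \<subseteq> \<Union>A" "V \<subseteq> \<Union>F" "V \<in> \<Omega>" unfolding sj jn_def by auto
      have "\<not> F \<subseteq> M"
      proof
        assume "F \<subseteq> M"
        hence "\<Union>F \<in> M" using ideal_Union_fin[OF e un int F(1) M(1)] by blast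
        hence "V \<in> M" using idealsD(3)[OF M(1)] F by blast
        thus False using V by blast
      qed
      then obtain X where X: "X \<in> F" "X \<notin> M" by blast
      then obtain I where I: "I \<in> A" "X \<in> I" using F by blast
      hence "I \<in> z" unfolding z_def using A X by blast
      thus ?thesis using I by blast
    qed
  qed
  moreover have "W \<in> downset \<Omega> W" unfolding downset_def using W by blast
  hence "downset \<Omega> W \<in> z" unfolding z_def using dW M by blast
  moreover have "K \<notin> z" unfolding z_def using M by blast
  ultimately show ?thesis by blast
qed

lemma Oset_downset_sub:
  assumes W: "W \<in> \<Omega>" and K: "K \<in> ideals \<Omega>" and sub: "Oset \<Omega> (downset \<Omega> W) \<subseteq> Oset \<Omega> K"
  shows "W \<in> K"
proof (rule ccontr)
  assume "W \<notin> K"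
  then obtain z where "z \<in> Xhat \<Omega>" "downset \<Omega> W \<in> z" "K \<notin> z" using separate W K by blast
  thus False using sub unfolding Oset_def by blast
qed

lemma Oset_sub_ideal:
  assumes I: "I \<in> ideals \<Omega>" and K: "K \<in> ideals \<Omega>" and sub: "Oset \<Omega> I \<subseteq> Oset \<Omega> K"
  shows "I \<subseteq> K"
proof
  fix W assume WI: "W \<in> I"
  hence W: "W \<in> \<Omega>" using idealsD(2)[OF I] by blast
  have "downset \<Omega> W \<subseteq> I" unfolding downset_def using idealsD(3)[OF I WI] by blast
  hence "Oset \<Omega> (downset \<Omega> W) \<subseteq> Oset \<Omega> I" using Oset_mono[OF e un int _ _ I] by blast
  thus "W \<in> K" using Oset_downset_sub[OF W K] sub by blast
qed

end


definition pw :: "'a set set \<Rightarrow> 'd set \<Rightarrow> ('d \<Rightarrow> 'd \<Rightarrow> bool) \<Rightarrow> ('a set set set \<Rightarrow> 'd) set \<Rightarrow> 'a set set set \<Rightarrow> 'd" where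
  "pw \<Omega> D le A = (\<lambda>y. if y \<in> Xhat \<Omega> then dlub D le ((\<lambda>f. f y) ` A) else undefined)"

context
  fixes \<Omega> :: "'a set set" and D :: "'d set" and le :: "'d \<Rightarrow> 'd \<Rightarrow> bool"
  assumes e: "{} \<in> \<Omega>" and un: "\<And>U V. U\<in>\<Omega> \<Longrightarrow> V\<in>\<Omega> \<Longrightarrow> U\<union>V\<in>\<Omega>"
    and int: "\<And>U V. U\<in>\<Omega> \<Longrightarrow> V\<in>\<Omega> \<Longrightarrow> U\<inter>V\<in>\<Omega>"
    and bc: "bc_domain D le"
begin

lemma po: "poset_on D le" using bc_po[OF bc] .

lemma fs_val: "f \<in> fun_space \<Omega> D le \<Longrightarrow> y \<in> Xhat \<Omega> \<Longrightarrow> f y \<in> D"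
  unfolding fun_space_def cont_fun_def by blast

lemma fs_ext: "f \<in> fun_space \<Omega> D le \<Longrightarrow> f \<in> extensional (Xhat \<Omega>)"
  unfolding fun_space_def by blast

lemma fs_open: "f \<in> fun_space \<Omega> D le \<Longrightarrow> scott_open D le V \<Longrightarrow> xopen \<Omega> {y\<in>Xhat \<Omega>. f y \<in> V}"
  unfolding fun_space_def cont_fun_def xopen_def by blast

lemma fs_intro:
  assumes "f \<in> extensional (Xhat \<Omega>)" "\<And>y. y \<in> Xhat \<Omega> \<Longrightarrow> f y \<in> D"
    "\<And>V. scott_open D le V \<Longrightarrow> xopen \<Omega> {y\<in>Xhat \<Omega>. f y \<in> V}"
  shows "f \<in> fun_space \<Omega> D le"
  using assms unfolding fun_space_def cont_fun_def xopen_def by blast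

lemma fs_po: "poset_on (fun_space \<Omega> D le) (fun_le \<Omega> le)"
  unfolding poset_on_def
proof (intro conjI ballI impI)
  fix f assume "f \<in> fun_space \<Omega> D le"
  thus "fun_le \<Omega> le f f" unfolding fun_le_def using fs_val po_refl[OF po] by blast
next
  fix f g assume f: "f \<in> fun_space \<Omega> D le" and g: "g \<in> fun_space \<Omega> D le" and fg: "fun_le \<Omega> le f g \<and> fun_le \<Omega> le g f"
  show "f = g"
  proof (rule extensionalityI[OF fs_ext[OF f] fs_ext[OF g]])
    fix y assume y: "y \<in> Xhat \<Omega>"
    show "f y = g y" using fg y fs_val[OF f y] fs_val[OF g y] po_antisym[OF po] unfolding fun_le_def by blast
  qed
next
  fix f g h assume f: "f \<in> fun_space \<Omega> D le" and g: "g \<in> fun_space \<Omega> D le" and h: "h \<in> fun_space \<Omega> D le"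
    and fgh: "fun_le \<Omega> le f g \<and> fun_le \<Omega> le g h"
  show "fun_le \<Omega> le f h" unfolding fun_le_def
  proof
    fix y assume y: "y \<in> Xhat \<Omega>"
    have "le (f y) (g y)" "le (g y) (h y)" using fgh y unfolding fun_le_def by auto
    thus "le (f y) (h y)" using po_trans[OF po] fs_val[OF f y] fs_val[OF g y] fs_val[OF h y] by blast
  qed
qed

lemma fs_wb_open:
  assumes f: "f \<in> fun_space \<Omega> D le" and c: "c \<in> D"
  shows "xopen \<Omega> {y\<in>Xhat \<Omega>. way_below D le c (f y)}"
proof -
  have "{y\<in>Xhat \<Omega>. way_below D le c (f y)} = {y\<in>Xhat \<Omega>. f y \<in> {z\<in>D. way_below D le c z}}"
    using fs_val[OF f] by auto
  thus ?thesis using fs_open[OF f wb_scott_open[OF bc_cd[OF bc] c]] by simp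
qed

lemma pointwise_lub:
  assumes A: "A \<subseteq> fun_space \<Omega> D le" and h: "h \<in> fun_space \<Omega> D le"
    and l: "\<And>y. y \<in> Xhat \<Omega> \<Longrightarrow> is_lub D le ((\<lambda>f. f y) ` A) (h y)"
  shows "is_lub (fun_space \<Omega> D le) (fun_le \<Omega> le) A h"
  unfolding is_lub_def
proof (intro conjI ballI impI)
  show "h \<in> fun_space \<Omega> D le" by fact
  fix f assume f: "f \<in> A"
  show "fun_le \<Omega> le f h" unfolding fun_le_def
  proof
    fix y assume "y \<in> Xhat \<Omega>"
    thus "le (f y) (h y)" using l f unfolding is_lub_def by blast
  qed
next
  fix u assume u: "u \<in> fun_space \<Omega> D le" "\<forall>f\<in>A. fun_le \<Omega> le f u"
  show "fun_le \<Omega> le h u" unfolding fun_le_def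
  proof
    fix y assume y: "y \<in> Xhat \<Omega>"
    have "\<forall>v\<in>(\<lambda>f. f y) ` A. le v (u y)" using u y unfolding fun_le_def by blast
    thus "le (h y) (u y)" using l[OF y] fs_val[OF u(1) y] unfolding is_lub_def by blast
  qed
qed

lemma pw_lub:
  assumes A: "A \<subseteq> fun_space \<Omega> D le" and b: "\<And>y. y \<in> Xhat \<Omega> \<Longrightarrow> \<exists>u\<in>D. \<forall>f\<in>A. le (f y) u"
    and y: "y \<in> Xhat \<Omega>"
  shows "is_lub D le ((\<lambda>f. f y) ` A) (pw \<Omega> D le A y)"
proof -
  obtain u where u: "u \<in> D" "\<forall>f\<in>A. le (f y) u" using b[OF y] by blast
  have "(\<lambda>f. f y) ` A \<subseteq> D" using A fs_val y by blast
  moreover have "\<forall>a\<in>(\<lambda>f. f y) ` A. le a u" using u by blast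
  ultimately show ?thesis unfolding pw_def using y bc_bounded_lub[OF bc _ u(1)] by simp
qed

lemma pw_in:
  assumes A: "A \<subseteq> fun_space \<Omega> D le" and b: "\<And>y. y \<in> Xhat \<Omega> \<Longrightarrow> \<exists>u\<in>D. \<forall>f\<in>A. le (f y) u"
  shows "pw \<Omega> D le A \<in> fun_space \<Omega> D le"
proof (rule fs_intro)
  show "pw \<Omega> D le A \<in> extensional (Xhat \<Omega>)" unfolding pw_def extensional_def by simp
  have L: "is_lub D le ((\<lambda>f. f y) ` A) (pw \<Omega> D le A y)" if "y \<in> Xhat \<Omega>" for y using pw_lub[OF A b that] .
  show pD: "pw \<Omega> D le A y \<in> D" if "y \<in> Xhat \<Omega>" for y using L[OF that] unfolding is_lub_def by blast
  fix V assume V: "scott_open D le V"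
  have Vup: "\<And>x z. x \<in> V \<Longrightarrow> z \<in> D \<Longrightarrow> le x z \<Longrightarrow> z \<in> V" and VD: "V \<subseteq> D"
    and Vs: "\<And>Q s. directed_in D le Q \<Longrightarrow> is_lub D le Q s \<Longrightarrow> s \<in> V \<Longrightarrow> Q \<inter> V \<noteq> {}"
    using V unfolding scott_open_def by blast+
  show "xopen \<Omega> {y\<in>Xhat \<Omega>. pw \<Omega> D le A y \<in> V}"
  proof (rule xopen_local[OF e un int])
    show "{y\<in>Xhat \<Omega>. pw \<Omega> D le A y \<in> V} \<subseteq> Xhat \<Omega>" by blast
    show "\<forall>y\<in>{y\<in>Xhat \<Omega>. pw \<Omega> D le A y \<in> V}. \<exists>U. xopen \<Omega> U \<and> y \<in> U \<and> U \<subseteq> {y\<in>Xhat \<Omega>. pw \<Omega> D le A y \<in> V}"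
    proof
      fix y assume yS: "y \<in> {y\<in>Xhat \<Omega>. pw \<Omega> D le A y \<in> V}"
      hence y: "y \<in> Xhat \<Omega>" and hV: "pw \<Omega> D le A y \<in> V" by auto
      define P where "P = {c\<in>D. \<exists>f\<in>A. way_below D le c (f y)}"
      define Q where "Q = {dlub D le C | C. finite C \<and> C \<subseteq> P}"
      have PD: "P \<subseteq> D" unfolding P_def by blast
      have Pb: "le c (pw \<Omega> D le A y)" if cP: "c \<in> P" for c
      proof -
        obtain f where f: "f \<in> A" "way_below D le c (f y)" using cP unfolding P_def by blast
        have "le c (f y)" using wb_le[OF po f(2)] .
        moreover have "le (f y) (pw \<Omega> D le A y)" using L[OF y] f(1) unfolding is_lub_def by blast
        moreover have "f y \<in> D" using A f(1) fs_val y by blast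
        ultimately show ?thesis using po_trans[OF po] cP PD pD[OF y] by blast
      qed
      have CL: "is_lub D le C (dlub D le C)" if "C \<subseteq> P" for C
        using bc_bounded_lub[OF bc _ pD[OF y]] that PD Pb by blast
      have QD: "Q \<subseteq> D" unfolding Q_def using CL unfolding is_lub_def by blast
      have dQ: "directed_in D le Q"
        unfolding directed_in_def
      proof (intro conjI ballI)
        show "Q \<subseteq> D" by fact
        have "dlub D le {} \<in> Q" unfolding Q_def by blast
        thus "Q \<noteq> {}" by blast
        fix q1 q2 assume "q1 \<in> Q" "q2 \<in> Q"
        then obtain C1 C2 where C: "finite C1" "C1 \<subseteq> P" "q1 = dlub D le C1" "finite C2" "C2 \<subseteq> P" "q2 = dlub D le C2"
          unfolding Q_def by auto
        have C12: "finite (C1 \<union> C2)" "C1 \<union> C2 \<subseteq> P" using C by auto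
        hence q3: "dlub D le (C1 \<union> C2) \<in> Q" unfolding Q_def by blast
        have l12: "is_lub D le (C1 \<union> C2) (dlub D le (C1 \<union> C2))" using CL[OF C12(2)] .
        have "le q1 (dlub D le (C1 \<union> C2))"
          using CL[OF C(2)] l12 C(3) unfolding is_lub_def by auto
        moreover have "le q2 (dlub D le (C1 \<union> C2))"
          using CL[OF C(5)] l12 C(6) unfolding is_lub_def by auto
        ultimately show "\<exists>z\<in>Q. le q1 z \<and> le q2 z" using q3 by blast
      qed
      have lQ: "is_lub D le Q (pw \<Omega> D le A y)"
        unfolding is_lub_def
      proof (intro conjI ballI impI)
        show "pw \<Omega> D le A y \<in> D" using pD[OF y] .
        fix q assume "q \<in> Q"
        then obtain C where C: "finite C" "C \<subseteq> P" "q = dlub D le C" unfolding Q_def by auto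
        have "\<forall>c\<in>C. le c (pw \<Omega> D le A y)" using Pb C(2) by blast
        thus "le q (pw \<Omega> D le A y)" using CL[OF C(2)] C(3) pD[OF y] unfolding is_lub_def by blast
      next
        fix u assume u: "u \<in> D" "\<forall>q\<in>Q. le q u"
        have "le (f y) u" if f: "f \<in> A" for f
        proof -
          have fy: "f y \<in> D" using A f fs_val y by blast
          have "\<forall>c\<in>{c\<in>D. way_below D le c (f y)}. le c u"
          proof
            fix c assume c: "c \<in> {c\<in>D. way_below D le c (f y)}"
            hence cP: "c \<in> P" unfolding P_def using f by blast
            hence "dlub D le {c} \<in> Q" unfolding Q_def by (intro CollectI exI[of _ "{c}"]) simp
            moreover have "dlub D le {c} = c" using dlub_eq[OF po lub_single[OF po]] cP PD by blast
            ultimately show "le c u" using u by auto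
          qed
          thus ?thesis using cd_approx[OF bc_cd[OF bc] fy] u(1) unfolding is_lub_def by blast
        qed
        hence "\<forall>a\<in>(\<lambda>f. f y) ` A. le a u" by blast
        thus "le (pw \<Omega> D le A y) u" using L[OF y] u(1) unfolding is_lub_def by blast
      qed
      have "Q \<inter> V \<noteq> {}" using Vs[OF dQ lQ hV] .
      then obtain C where C: "finite C" "C \<subseteq> P" "dlub D le C \<in> V" unfolding Q_def by auto
      have "\<forall>c\<in>C. \<exists>f. f \<in> A \<and> way_below D le c (f y)" using C(2) unfolding P_def by blast
      then obtain g where g: "\<And>c. c \<in> C \<Longrightarrow> g c \<in> A \<and> way_below D le c (g c y)" by metis
      define U where "U = {z\<in>Xhat \<Omega>. \<forall>c\<in>C. z \<in> {z\<in>Xhat \<Omega>. way_below D le c (g c z)}}"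
      have "xopen \<Omega> U" unfolding U_def
      proof (rule xopen_fin_int[OF e un int C(1)])
        show "\<forall>c\<in>C. xopen \<Omega> {z\<in>Xhat \<Omega>. way_below D le c (g c z)}"
          using fs_wb_open g A C(2) PD by blast
      qed
      moreover have "y \<in> U" unfolding U_def using y g by blast
      moreover have "U \<subseteq> {y\<in>Xhat \<Omega>. pw \<Omega> D le A y \<in> V}"
      proof
        fix z assume z: "z \<in> U"
        hence zX: "z \<in> Xhat \<Omega>" unfolding U_def by blast
        have "le c (pw \<Omega> D le A z)" if c: "c \<in> C" for c
        proof -
          have wz: "way_below D le c (g c z)" using z c unfolding U_def by blast
          have gA: "g c \<in> A" using g c by blast
          have "le (g c z) (pw \<Omega> D le A z)" using L[OF zX] gA unfolding is_lub_def by blast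
          moreover have "g c z \<in> D" using A gA fs_val zX by blast
          ultimately show ?thesis using wb_le[OF po wz] po_trans[OF po] c C(2) PD pD[OF zX] by blast
        qed
        hence "le (dlub D le C) (pw \<Omega> D le A z)" using CL[OF C(2)] pD[OF zX] unfolding is_lub_def by blast
        hence "pw \<Omega> D le A z \<in> V" using Vup[OF C(3) pD[OF zX]] by blast
        thus "z \<in> {y\<in>Xhat \<Omega>. pw \<Omega> D le A y \<in> V}" using zX by blast
      qed
      ultimately show "\<exists>U. xopen \<Omega> U \<and> y \<in> U \<and> U \<subseteq> {y\<in>Xhat \<Omega>. pw \<Omega> D le A y \<in> V}" by blast
    qed
  qed
qed

lemma pw_is_lub:
  assumes A: "A \<subseteq> fun_space \<Omega> D le" and b: "\<And>y. y \<in> Xhat \<Omega> \<Longrightarrow> \<exists>u\<in>D. \<forall>f\<in>A. le (f y) u"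
  shows "is_lub (fun_space \<Omega> D le) (fun_le \<Omega> le) A (pw \<Omega> D le A)"
  using pointwise_lub[OF A pw_in[OF A b] pw_lub[OF A b]] .

end


context
  fixes \<Omega> :: "'a set set" and D :: "'d set" and le :: "'d \<Rightarrow> 'd \<Rightarrow> bool"
  assumes e: "{} \<in> \<Omega>" and un: "\<And>U V. U\<in>\<Omega> \<Longrightarrow> V\<in>\<Omega> \<Longrightarrow> U\<union>V\<in>\<Omega>"
    and int: "\<And>U V. U\<in>\<Omega> \<Longrightarrow> V\<in>\<Omega> \<Longrightarrow> U\<inter>V\<in>\<Omega>"
    and bc: "bc_domain D le"
begin

lemmas ctx6 = e un int bc

lemma fs_dir_pt:
  assumes G: "directed_in (fun_space \<Omega> D le) (fun_le \<Omega> le) G" and z: "z \<in> Xhat \<Omega>"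
  shows "directed_in D le ((\<lambda>f. f z) ` G)"
  unfolding directed_in_def
proof (intro conjI ballI)
  have GF: "G \<subseteq> fun_space \<Omega> D le" "G \<noteq> {}" using G unfolding directed_in_def by auto
  show "(\<lambda>f. f z) ` G \<subseteq> D" using GF fs_val[OF ctx6 _ z] by blast
  show "(\<lambda>f. f z) ` G \<noteq> {}" using GF by blast
  fix a1 a2 assume "a1 \<in> (\<lambda>f. f z) ` G" "a2 \<in> (\<lambda>f. f z) ` G"
  then obtain g1 g2 where g: "g1 \<in> G" "a1 = g1 z" "g2 \<in> G" "a2 = g2 z" by blast
  then obtain g3 where g3: "g3 \<in> G" "fun_le \<Omega> le g1 g3" "fun_le \<Omega> le g2 g3" using G unfolding directed_in_def by meson
  have "le a1 (g3 z)" "le a2 (g3 z)" using g g3 z unfolding fun_le_def by auto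
  thus "\<exists>c\<in>(\<lambda>f. f z) ` G. le a1 c \<and> le a2 c" using g3 by blast
qed

lemma fs_dir_lub:
  assumes G: "directed_in (fun_space \<Omega> D le) (fun_le \<Omega> le) G"
  shows "is_lub (fun_space \<Omega> D le) (fun_le \<Omega> le) G (pw \<Omega> D le G)"
proof (rule pw_is_lub[OF ctx6])
  show "G \<subseteq> fun_space \<Omega> D le" using G unfolding directed_in_def by auto
  fix y assume y: "y \<in> Xhat \<Omega>"
  have "is_lub D le ((\<lambda>f. f y) ` G) (dlub D le ((\<lambda>f. f y) ` G))" using bc_directed_lub[OF bc fs_dir_pt[OF G y]] .
  thus "\<exists>u\<in>D. \<forall>f\<in>G. le (f y) u" unfolding is_lub_def by blast
qed

lemma fs_dir_lub_pt:
  assumes G: "directed_in (fun_space \<Omega> D le) (fun_le \<Omega> le) G" and l: "is_lub (fun_space \<Omega> D le) (fun_le \<Omega> le) G g"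
    and y: "y \<in> Xhat \<Omega>"
  shows "is_lub D le ((\<lambda>f. f y) ` G) (g y)"
proof -
  have "g = pw \<Omega> D le G" using lub_unique[OF fs_po[OF ctx6] l fs_dir_lub[OF G]] .
  moreover have "is_lub D le ((\<lambda>f. f y) ` G) (pw \<Omega> D le G y)"
  proof (rule pw_lub[OF ctx6 _ _ y])
    show "G \<subseteq> fun_space \<Omega> D le" using G unfolding directed_in_def by auto
    fix y assume y: "y \<in> Xhat \<Omega>"
    have "is_lub D le ((\<lambda>f. f y) ` G) (dlub D le ((\<lambda>f. f y) ` G))" using bc_directed_lub[OF bc fs_dir_pt[OF G y]] .
    thus "\<exists>u\<in>D. \<forall>f\<in>G. le (f y) u" unfolding is_lub_def by blast
  qed
  ultimately show ?thesis by simp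
qed

lemma fs_dcpo: "dcpo (fun_space \<Omega> D le) (fun_le \<Omega> le)"
  unfolding dcpo_def using fs_po[OF ctx6] fs_dir_lub by blast

lemma fs_bot: "\<exists>b\<in>fun_space \<Omega> D le. \<forall>x\<in>fun_space \<Omega> D le. fun_le \<Omega> le b x"
proof -
  have "is_lub (fun_space \<Omega> D le) (fun_le \<Omega> le) {} (pw \<Omega> D le {})"
    using pw_is_lub[OF ctx6, of "{}"] bc_bot[OF bc] by blast
  thus ?thesis unfolding is_lub_def by blast
qed

lemma fs_bcompl:
  assumes A: "A \<subseteq> fun_space \<Omega> D le" and u: "u \<in> fun_space \<Omega> D le" "\<forall>a\<in>A. fun_le \<Omega> le a u"
  shows "\<exists>s. is_lub (fun_space \<Omega> D le) (fun_le \<Omega> le) A s"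
proof -
  have "\<exists>v\<in>D. \<forall>f\<in>A. le (f y) v" if y: "y \<in> Xhat \<Omega>" for y
    using u y fs_val[OF ctx6 u(1) y] unfolding fun_le_def by blast
  thus ?thesis using pw_is_lub[OF ctx6 A] by blast
qed

lemma step_in:
  assumes b: "b \<in> D" and I: "I \<in> ideals \<Omega>"
  shows "step_fun \<Omega> D le b (Oset \<Omega> I) \<in> fun_space \<Omega> D le"
proof (rule fs_intro[OF ctx6])
  show "step_fun \<Omega> D le b (Oset \<Omega> I) \<in> extensional (Xhat \<Omega>)" unfolding step_fun_def extensional_def by simp
  show "step_fun \<Omega> D le b (Oset \<Omega> I) y \<in> D" if "y \<in> Xhat \<Omega>" for y
    unfolding step_fun_def using that b bc_bot[OF bc] by simp
  fix V assume V: "scott_open D le V"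
  have Vup: "\<And>x z. x \<in> V \<Longrightarrow> z \<in> D \<Longrightarrow> le x z \<Longrightarrow> z \<in> V"
    using V unfolding scott_open_def by blast
  have bot: "dbot D le \<in> D" "le (dbot D le) b" using bc_bot[OF bc] b by auto
  show "xopen \<Omega> {y\<in>Xhat \<Omega>. step_fun \<Omega> D le b (Oset \<Omega> I) y \<in> V}"
  proof (cases "dbot D le \<in> V")
    case True
    hence "b \<in> V" using Vup bot b by blast
    hence eq: "{y\<in>Xhat \<Omega>. step_fun \<Omega> D le b (Oset \<Omega> I) y \<in> V} = Xhat \<Omega>"
      unfolding step_fun_def using True by auto
    show ?thesis unfolding eq by (rule xopen_Xhat[OF e un int])
  next
    case False
    show ?thesis
    proof (cases "b \<in> V")
      case True
      hence eq: "{y\<in>Xhat \<Omega>. step_fun \<Omega> D le b (Oset \<Omega> I) y \<in> V} = Oset \<Omega> I"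
        unfolding step_fun_def using False Oset_sub by auto
      show ?thesis unfolding eq by (rule xopen_Oset[OF e un int I])
    next
      case False2: False
      hence eq: "{y\<in>Xhat \<Omega>. step_fun \<Omega> D le b (Oset \<Omega> I) y \<in> V} = {}"
        unfolding step_fun_def using False by auto
      show ?thesis unfolding eq by (rule xopen_empty[OF e un int])
    qed
  qed
qed

lemma step_join_pw:
  "step_join \<Omega> D le I b Ob = pw \<Omega> D le ((\<lambda>i. step_fun \<Omega> D le (b i) (Ob i)) ` I)"
  unfolding step_join_def pw_def by (rule ext) (simp add: image_image)

lemma step_join_lub:
  assumes I: "\<forall>i\<in>I. b i \<in> D \<and> Ob i \<in> (Oset \<Omega>) ` (ideals \<Omega>)"
    and c: "consistent_family \<Omega> D le I b Ob"
  shows "is_lub (fun_space \<Omega> D le) (fun_le \<Omega> le) ((\<lambda>i. step_fun \<Omega> D le (b i) (Ob i)) ` I) (step_join \<Omega> D le I b Ob)"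
  unfolding step_join_pw
proof (rule pw_is_lub[OF ctx6])
  show "(\<lambda>i. step_fun \<Omega> D le (b i) (Ob i)) ` I \<subseteq> fun_space \<Omega> D le"
  proof
    fix f assume "f \<in> (\<lambda>i. step_fun \<Omega> D le (b i) (Ob i)) ` I"
    then obtain i where i: "i \<in> I" "f = step_fun \<Omega> D le (b i) (Ob i)" by blast
    then obtain K where K: "K \<in> ideals \<Omega>" "Ob i = Oset \<Omega> K" using I by blast
    show "f \<in> fun_space \<Omega> D le" using step_in[of "b i" K] i I K by simp
  qed
  fix y assume y: "y \<in> Xhat \<Omega>"
  define J where "J = {i\<in>I. y \<in> Ob i}"
  have JI: "J \<subseteq> I" unfolding J_def by blast
  have ne: "{y\<in>Xhat \<Omega>. \<forall>j\<in>J. y \<in> Ob j} \<noteq> {}" using y unfolding J_def by blast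
  have "\<forall>J. J \<subseteq> I \<longrightarrow> {y \<in> Xhat \<Omega>. \<forall>j\<in>J. y \<in> Ob j} \<noteq> {} \<longrightarrow> (\<exists>u\<in>D. \<forall>j\<in>J. le (b j) u)"
    using c unfolding consistent_family_def .
  hence "\<exists>u\<in>D. \<forall>j\<in>J. le (b j) u" using JI ne by blast
  then obtain u where u: "u \<in> D" "\<forall>j\<in>J. le (b j) u" by blast
  have "\<forall>i\<in>I. le (step_fun \<Omega> D le (b i) (Ob i) y) u"
    unfolding step_fun_def using u y bc_bot[OF bc] unfolding J_def by auto
  thus "\<exists>u\<in>D. \<forall>f\<in>(\<lambda>i. step_fun \<Omega> D le (b i) (Ob i)) ` I. le (f y) u" using u by blast
qed

lemma basis_sub: "basis_hat \<Omega> D le D0 \<subseteq> fun_space \<Omega> D le" if D0: "D0 \<subseteq> D"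
proof
  fix f assume "f \<in> basis_hat \<Omega> D le D0"
  hence "\<exists>(I::nat set) b W. f = step_join \<Omega> D le I b (\<lambda>i. Oset \<Omega> (downset \<Omega> (W i))) \<and>
    consistent_family \<Omega> D le I b (\<lambda>i. Oset \<Omega> (downset \<Omega> (W i))) \<and> (\<forall>i\<in>I. W i \<in> \<Omega> \<and> b i \<in> D0)"
    unfolding basis_hat_def by blast
  then obtain I :: "nat set" and b W where f: "f = step_join \<Omega> D le I b (\<lambda>i. Oset \<Omega> (downset \<Omega> (W i)))"
    "consistent_family \<Omega> D le I b (\<lambda>i. Oset \<Omega> (downset \<Omega> (W i)))" "\<forall>i\<in>I. W i \<in> \<Omega> \<and> b i \<in> D0"
    by blast
  have "\<forall>i\<in>I. b i \<in> D \<and> Oset \<Omega> (downset \<Omega> (W i)) \<in> (Oset \<Omega>) ` (ideals \<Omega>)"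
    using f(3) D0 downset_ideal[OF e un int] by auto
  hence "is_lub (fun_space \<Omega> D le) (fun_le \<Omega> le) ((\<lambda>i. step_fun \<Omega> D le (b i) (Oset \<Omega> (downset \<Omega> (W i)))) ` I) f"
    using step_join_lub[OF _ f(2)] f(1) by simp
  thus "f \<in> fun_space \<Omega> D le" unfolding is_lub_def by blast
qed

end


context
  fixes \<Omega> :: "'a set set" and D :: "'d set" and le :: "'d \<Rightarrow> 'd \<Rightarrow> bool"
  assumes e: "{} \<in> \<Omega>" and un: "\<And>U V. U\<in>\<Omega> \<Longrightarrow> V\<in>\<Omega> \<Longrightarrow> U\<union>V\<in>\<Omega>"
    and int: "\<And>U V. U\<in>\<Omega> \<Longrightarrow> V\<in>\<Omega> \<Longrightarrow> U\<inter>V\<in>\<Omega>"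
    and bc: "bc_domain D le"
begin

lemmas ctx7 = e un int bc
lemmas ctxx7 = e un int

lemma step_wb:
  assumes f: "f \<in> fun_space \<Omega> D le" and y: "y \<in> Xhat \<Omega>" and b: "b \<in> D" and bw: "way_below D le b (f y)"
  shows "\<exists>W\<in>\<Omega>. y \<in> Oset \<Omega> (downset \<Omega> W) \<and>
           way_below (fun_space \<Omega> D le) (fun_le \<Omega> le) (step_fun \<Omega> D le b (Oset \<Omega> (downset \<Omega> W))) f"
proof -
  note po = bc_po[OF bc]
  obtain c where c: "c \<in> D" "way_below D le b c" "way_below D le c (f y)"
    using interpolate[OF bc_cd[OF bc] bw] by blast
  obtain I where I: "I \<in> ideals \<Omega>" "{z\<in>Xhat \<Omega>. way_below D le c (f z)} = Oset \<Omega> I"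
    using fs_wb_open[OF ctx7 f c(1)] unfolding xopen_def by blast
  have "y \<in> Oset \<Omega> I" using I(2) y c(3) by blast
  then obtain W where W: "W \<in> I" "y \<in> Oset \<Omega> (downset \<Omega> W)" using Oset_downset_base[OF ctxx7 I(1)] by blast
  have WO: "W \<in> \<Omega>" using W(1) idealsD(2)[OF I(1)] by blast
  have dWi: "downset \<Omega> W \<in> ideals \<Omega>" using downset_ideal[OF ctxx7 WO] .
  have dWI: "downset \<Omega> W \<subseteq> I" unfolding downset_def using idealsD(3)[OF I(1) W(1)] by blast
  have OWI: "Oset \<Omega> (downset \<Omega> W) \<subseteq> {z\<in>Xhat \<Omega>. way_below D le c (f z)}"
    unfolding I(2) using Oset_mono[OF ctxx7 _ dWI I(1)] by blast
  define s where "s = step_fun \<Omega> D le b (Oset \<Omega> (downset \<Omega> W))"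
  have sF: "s \<in> fun_space \<Omega> D le" unfolding s_def using step_in[OF ctx7 b dWi] .
  have "way_below (fun_space \<Omega> D le) (fun_le \<Omega> le) s f"
    unfolding way_below_def
  proof (intro conjI allI impI)
    show "s \<in> fun_space \<Omega> D le" by fact
    show "f \<in> fun_space \<Omega> D le" by fact
    fix G g assume G: "directed_in (fun_space \<Omega> D le) (fun_le \<Omega> le) G"
      and l: "is_lub (fun_space \<Omega> D le) (fun_le \<Omega> le) G g" and fg: "fun_le \<Omega> le f g"
    have GF: "G \<subseteq> fun_space \<Omega> D le" "G \<noteq> {}" using G unfolding directed_in_def by auto
    have gF: "g \<in> fun_space \<Omega> D le" using l unfolding is_lub_def by blast
    have "\<forall>h\<in>G. \<exists>K. K \<in> ideals \<Omega> \<and> {z\<in>Xhat \<Omega>. way_below D le b (h z)} = Oset \<Omega> K"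
      using fs_wb_open[OF ctx7 _ b] GF unfolding xopen_def by blast
    then obtain K where K: "\<And>h. h \<in> G \<Longrightarrow> K h \<in> ideals \<Omega> \<and> {z\<in>Xhat \<Omega>. way_below D le b (h z)} = Oset \<Omega> (K h)"
      by metis
    have Kmono: "K h1 \<subseteq> K h2" if h: "h1 \<in> G" "h2 \<in> G" "fun_le \<Omega> le h1 h2" for h1 h2
    proof -
      have "Oset \<Omega> (K h1) \<subseteq> Oset \<Omega> (K h2)"
      proof
        fix z assume "z \<in> Oset \<Omega> (K h1)"
        hence z: "z \<in> Xhat \<Omega>" "way_below D le b (h1 z)" using K[OF h(1)] by blast+
        have "le (h1 z) (h2 z)" using h(3) z(1) unfolding fun_le_def by blast
        hence "way_below D le b (h2 z)" using wb_trans_le[OF po z(2)] fs_val[OF ctx7 _ z(1)] h(2) GF by blast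
        thus "z \<in> Oset \<Omega> (K h2)" using K[OF h(2)] z(1) by blast
      qed
      thus ?thesis using Oset_sub_ideal[OF ctxx7] K h by blast
    qed
    define \<K> where "\<K> = K ` G"
    have KI: "\<K> \<subseteq> ideals \<Omega>" "\<K> \<noteq> {}" unfolding \<K>_def using K GF by auto
    have Kd: "\<exists>L\<in>\<K>. I1 \<subseteq> L \<and> I2 \<subseteq> L" if hI: "I1 \<in> \<K>" "I2 \<in> \<K>" for I1 I2
    proof -
      obtain h1 h2 where h: "h1 \<in> G" "h2 \<in> G" "I1 = K h1" "I2 = K h2" using hI unfolding \<K>_def by blast
      then obtain h3 where h3: "h3 \<in> G" "fun_le \<Omega> le h1 h3" "fun_le \<Omega> le h2 h3"
        using G unfolding directed_in_def by meson
      have "K h1 \<subseteq> K h3" "K h2 \<subseteq> K h3" using Kmono h h3 by blast+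
      thus ?thesis using h h3 unfolding \<K>_def by blast
    qed
    have UK: "\<Union>\<K> \<in> ideals \<Omega>" using dir_union_ideal[OF ctxx7 KI Kd] by blast
    have "Oset \<Omega> (downset \<Omega> W) \<subseteq> Oset \<Omega> (\<Union>\<K>)"
    proof
      fix z assume zW: "z \<in> Oset \<Omega> (downset \<Omega> W)"
      hence z: "z \<in> Xhat \<Omega>" "way_below D le c (f z)" using OWI by blast+
      have "le (f z) (g z)" using fg z(1) unfolding fun_le_def by blast
      hence cg: "way_below D le c (g z)" using wb_trans_le[OF po z(2)] fs_val[OF ctx7 gF z(1)] by blast
      have dl: "directed_in D le ((\<lambda>h. h z) ` G)" using fs_dir_pt[OF ctx7 G z(1)] .
      have ll: "is_lub D le ((\<lambda>h. h z) ` G) (g z)" using fs_dir_lub_pt[OF ctx7 G l z(1)] .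
      have "le (g z) (g z)" using po_refl[OF po] fs_val[OF ctx7 gF z(1)] by blast
      hence "\<exists>a\<in>(\<lambda>h. h z) ` G. le c a" using cg dl ll unfolding way_below_def by blast
      then obtain h where h: "h \<in> G" "le c (h z)" by blast
      have "way_below D le b (h z)" using le_wb[OF po] wb_trans_le[OF po c(2) h(2)] fs_val[OF ctx7 _ z(1)] h GF by blast
      hence "z \<in> Oset \<Omega> (K h)" using K[OF h(1)] z(1) by blast
      moreover have "K h \<subseteq> \<Union>\<K>" unfolding \<K>_def using h by blast
      ultimately show "z \<in> Oset \<Omega> (\<Union>\<K>)" using Oset_mono[OF ctxx7 _ _ UK] by blast
    qed
    hence "W \<in> \<Union>\<K>" using Oset_downset_sub[OF ctxx7 WO UK] by blast
    then obtain h where h: "h \<in> G" "W \<in> K h" unfolding \<K>_def by blast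
    have Kh: "K h \<in> ideals \<Omega>" using K h(1) by blast
    have "downset \<Omega> W \<subseteq> K h" unfolding downset_def using idealsD(3)[OF Kh h(2)] by blast
    hence OK: "Oset \<Omega> (downset \<Omega> W) \<subseteq> {z\<in>Xhat \<Omega>. way_below D le b (h z)}"
      using Oset_mono[OF ctxx7 _ _ Kh] K[OF h(1)] by blast
    have "fun_le \<Omega> le s h" unfolding fun_le_def
    proof
      fix z assume z: "z \<in> Xhat \<Omega>"
      have hz: "h z \<in> D" using fs_val[OF ctx7 _ z] h(1) GF by blast
      show "le (s z) (h z)"
      proof (cases "z \<in> Oset \<Omega> (downset \<Omega> W)")
        case True
        hence "way_below D le b (h z)" using OK by blast
        thus ?thesis unfolding s_def step_fun_def using z True wb_le[OF po] by simp
      next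
        case False
        thus ?thesis unfolding s_def step_fun_def using z bc_bot[OF bc] hz by simp
      qed
    qed
    thus "\<exists>a\<in>G. fun_le \<Omega> le s a" using h(1) by blast
  qed
  thus ?thesis using WO W(2) unfolding s_def by blast
qed

end


lemma lub_union2:
  assumes po: "poset_on S le" and l1: "is_lub S le A a1" and l2: "is_lub S le B a2" and l: "is_lub S le (A \<union> B) s"
    and AS: "A \<subseteq> S" and BS: "B \<subseteq> S"
  shows "is_lub S le {a1, a2} s"
  unfolding is_lub_def
proof (intro conjI ballI impI)
  have s: "s \<in> S" using l unfolding is_lub_def by blast
  have a: "a1 \<in> S" "a2 \<in> S" using l1 l2 unfolding is_lub_def by auto
  show "s \<in> S" by fact
  have "le a1 s" using l1 l s unfolding is_lub_def by blast
  moreover have "le a2 s" using l2 l s unfolding is_lub_def by blast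
  ultimately show "le x s" if "x \<in> {a1, a2}" for x using that by blast
  fix u assume u: "u \<in> S" "\<forall>x\<in>{a1, a2}. le x u"
  have "le x u" if x: "x \<in> A \<union> B" for x
  proof (cases "x \<in> A")
    case True
    hence "le x a1" using l1 unfolding is_lub_def by blast
    thus ?thesis using po_trans[OF po _ _ _ a(1) u(1)] u True AS by blast
  next
    case False
    hence "x \<in> B" using x by blast
    hence "le x a2" using l2 unfolding is_lub_def by blast
    thus ?thesis using po_trans[OF po _ _ _ a(2) u(1)] u \<open>x \<in> B\<close> BS by blast
  qed
  thus "le s u" using l u(1) unfolding is_lub_def by blast
qed

context
  fixes \<Omega> :: "'a set set" and D :: "'d set" and le :: "'d \<Rightarrow> 'd \<Rightarrow> bool" and D0 :: "'d set"
  assumes e: "{} \<in> \<Omega>" and un: "\<And>U V. U\<in>\<Omega> \<Longrightarrow> V\<in>\<Omega> \<Longrightarrow> U\<union>V\<in>\<Omega>"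
    and int: "\<And>U V. U\<in>\<Omega> \<Longrightarrow> V\<in>\<Omega> \<Longrightarrow> U\<inter>V\<in>\<Omega>"
    and bc: "bc_domain D le" and D0: "domain_basis D le D0"
begin

lemmas c8 = e un int bc
lemmas c83 = e un int

lemma D0D: "D0 \<subseteq> D" using D0 unfolding domain_basis_def by blast

abbreviation "FS \<equiv> fun_space \<Omega> D le"
abbreviation "FL \<equiv> fun_le \<Omega> le"
abbreviation "BH \<equiv> basis_hat \<Omega> D le D0"

lemma BH_elim:
  assumes "a \<in> BH"
  obtains I :: "nat set" and b W where "a = step_join \<Omega> D le I b (\<lambda>i. Oset \<Omega> (downset \<Omega> (W i)))" "finite I"
    "consistent_family \<Omega> D le I b (\<lambda>i. Oset \<Omega> (downset \<Omega> (W i)))" "\<forall>i\<in>I. W i \<in> \<Omega> \<and> b i \<in> D0"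
proof -
  have "\<exists>(I::nat set) b W. a = step_join \<Omega> D le I b (\<lambda>i. Oset \<Omega> (downset \<Omega> (W i))) \<and> finite I \<and>
    consistent_family \<Omega> D le I b (\<lambda>i. Oset \<Omega> (downset \<Omega> (W i))) \<and> (\<forall>i\<in>I. W i \<in> \<Omega> \<and> b i \<in> D0)"
    using assms unfolding basis_hat_def by blast
  thus ?thesis using that by blast
qed

lemma BH_intro:
  assumes "finite (I::nat set)" "consistent_family \<Omega> D le I b (\<lambda>i. Oset \<Omega> (downset \<Omega> (W i)))" "\<forall>i\<in>I. W i \<in> \<Omega> \<and> b i \<in> D0"
  shows "step_join \<Omega> D le I b (\<lambda>i. Oset \<Omega> (downset \<Omega> (W i))) \<in> BH"
  using assms unfolding basis_hat_def by blast

lemma BH_lub: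
  assumes "\<forall>i\<in>I. W i \<in> \<Omega> \<and> b i \<in> D0" "consistent_family \<Omega> D le I b (\<lambda>i. Oset \<Omega> (downset \<Omega> (W i)))"
  shows "is_lub FS FL ((\<lambda>i. step_fun \<Omega> D le (b i) (Oset \<Omega> (downset \<Omega> (W i)))) ` I)
           (step_join \<Omega> D le I b (\<lambda>i. Oset \<Omega> (downset \<Omega> (W i))))"
proof (rule step_join_lub[OF c8 _ assms(2)])
  show "\<forall>i\<in>I. b i \<in> D \<and> Oset \<Omega> (downset \<Omega> (W i)) \<in> Oset \<Omega> ` ideals \<Omega>"
    using assms(1) D0D downset_ideal[OF c83] by blast
qed

lemma single_BH:
  assumes W: "W \<in> \<Omega>" and b: "b \<in> D0"
  shows "step_fun \<Omega> D le b (Oset \<Omega> (downset \<Omega> W)) \<in> BH"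
proof -
  let ?s = "step_fun \<Omega> D le b (Oset \<Omega> (downset \<Omega> W))"
  have bD: "b \<in> D" using b D0D by blast
  have cf: "consistent_family \<Omega> D le {0::nat} (\<lambda>_. b) (\<lambda>i. Oset \<Omega> (downset \<Omega> ((\<lambda>_. W) i)))"
    unfolding consistent_family_def using bD po_refl[OF bc_po[OF bc]] by blast
  have mem: "step_join \<Omega> D le {0::nat} (\<lambda>_. b) (\<lambda>i. Oset \<Omega> (downset \<Omega> ((\<lambda>_. W) i))) \<in> BH"
    by (rule BH_intro) (use cf W b in auto)
  have "step_join \<Omega> D le {0::nat} (\<lambda>_. b) (\<lambda>i. Oset \<Omega> (downset \<Omega> ((\<lambda>_. W) i))) = ?s"
  proof
    fix y
    show "step_join \<Omega> D le {0::nat} (\<lambda>_. b) (\<lambda>i. Oset \<Omega> (downset \<Omega> ((\<lambda>_. W) i))) y = ?s y"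
    proof (cases "y \<in> Xhat \<Omega>")
      case True
      have "?s y \<in> D" unfolding step_fun_def using True bD bc_bot[OF bc] by simp
      hence "dlub D le {?s y} = ?s y" using dlub_eq[OF bc_po[OF bc] lub_single[OF bc_po[OF bc]]] by blast
      thus ?thesis unfolding step_join_def using True by simp
    next
      case False
      thus ?thesis unfolding step_join_def step_fun_def by simp
    qed
  qed
  thus ?thesis using mem by simp
qed

lemma bot_BH: "\<exists>a\<in>BH. \<forall>f\<in>FS. FL a f"
proof -
  have cf: "consistent_family \<Omega> D le ({}::nat set) (\<lambda>_. dbot D le) (\<lambda>i. Oset \<Omega> (downset \<Omega> ((\<lambda>_. {}) i)))"
    unfolding consistent_family_def using bc_bot[OF bc] by blast
  have mem: "step_join \<Omega> D le ({}::nat set) (\<lambda>_. dbot D le) (\<lambda>i. Oset \<Omega> (downset \<Omega> ((\<lambda>_. {}) i))) \<in> BH"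
    by (rule BH_intro) (use cf in auto)
  have "is_lub FS FL {} (step_join \<Omega> D le ({}::nat set) (\<lambda>_. dbot D le) (\<lambda>i. Oset \<Omega> (downset \<Omega> ((\<lambda>_. {}) i))))"
    using BH_lub[OF _ cf] by simp
  thus ?thesis using mem unfolding is_lub_def by blast
qed

lemma least_wb:
  assumes a: "a \<in> FS" and least: "\<forall>f\<in>FS. FL a f" and f: "f \<in> FS"
  shows "way_below FS FL a f"
proof -
  { fix G s assume "directed_in FS FL G"
    then obtain h where "h \<in> G" "h \<in> FS" unfolding directed_in_def by blast
    hence "\<exists>h\<in>G. FL a h" using least by blast }
  thus ?thesis unfolding way_below_def using a f by blast
qed

lemma BH_join:
  assumes a1: "a1 \<in> BH" and a2: "a2 \<in> BH" and f: "f \<in> FS" and le1: "FL a1 f" and le2: "FL a2 f"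
  shows "\<exists>a3\<in>BH. is_lub FS FL {a1, a2} a3"
proof -
  have fpo: "poset_on FS FL" by (rule fs_po[OF e _ _ bc]) (simp_all add: un int)
  obtain I1 :: "nat set" and b1 W1 where A1: "a1 = step_join \<Omega> D le I1 b1 (\<lambda>i. Oset \<Omega> (downset \<Omega> (W1 i)))" "finite I1"
    "consistent_family \<Omega> D le I1 b1 (\<lambda>i. Oset \<Omega> (downset \<Omega> (W1 i)))" "\<forall>i\<in>I1. W1 i \<in> \<Omega> \<and> b1 i \<in> D0"
    using BH_elim[OF a1] by blast
  obtain I2 :: "nat set" and b2 W2 where A2: "a2 = step_join \<Omega> D le I2 b2 (\<lambda>i. Oset \<Omega> (downset \<Omega> (W2 i)))" "finite I2"
    "consistent_family \<Omega> D le I2 b2 (\<lambda>i. Oset \<Omega> (downset \<Omega> (W2 i)))" "\<forall>i\<in>I2. W2 i \<in> \<Omega> \<and> b2 i \<in> D0"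
    using BH_elim[OF a2] by blast
  define st where "st = (\<lambda>b W. step_fun \<Omega> D le b (Oset \<Omega> (downset \<Omega> W)))"
  define S1 where "S1 = (\<lambda>i. st (b1 i) (W1 i)) ` I1"
  define S2 where "S2 = (\<lambda>i. st (b2 i) (W2 i)) ` I2"
  have L1: "is_lub FS FL S1 a1" unfolding S1_def st_def A1(1) using BH_lub[OF A1(4,3)] .
  have L2: "is_lub FS FL S2 a2" unfolding S2_def st_def A2(1) using BH_lub[OF A2(4,3)] .
  have S1F: "S1 \<subseteq> FS" and S2F: "S2 \<subseteq> FS"
    unfolding S1_def S2_def st_def using A1(4) A2(4) D0D step_in[OF c8 _ downset_ideal[OF c83]] by blast+
  define I3 where "I3 = (\<lambda>i. 2*i) ` I1 \<union> (\<lambda>i. 2*i+1) ` I2"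
  define b3 where "b3 = (\<lambda>i::nat. if even i then b1 (i div 2) else b2 (i div 2))"
  define W3 where "W3 = (\<lambda>i::nat. if even i then W1 (i div 2) else W2 (i div 2))"
  have im1: "(\<lambda>i. st (b3 i) (W3 i)) ` ((\<lambda>i. 2*i) ` I1) = S1"
    unfolding S1_def b3_def W3_def image_image by simp
  have im2: "(\<lambda>i. st (b3 i) (W3 i)) ` ((\<lambda>i. 2*i+1) ` I2) = S2"
    unfolding S2_def b3_def W3_def image_image by simp
  have img: "(\<lambda>i. st (b3 i) (W3 i)) ` I3 = S1 \<union> S2"
    unfolding I3_def image_Un im1 im2 ..
  have fin: "finite I3" unfolding I3_def using A1(2) A2(2) by simp
  have prop3: "\<forall>i\<in>I3. W3 i \<in> \<Omega> \<and> b3 i \<in> D0" unfolding I3_def b3_def W3_def using A1(4) A2(4) by auto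
  have sle: "FL s f" if s: "s \<in> S1 \<union> S2" for s
  proof (cases "s \<in> S1")
    case True
    have "FL s a1" using L1 True unfolding is_lub_def by blast
    moreover have "a1 \<in> FS" using L1 unfolding is_lub_def by blast
    ultimately show ?thesis using po_trans[OF fpo, of s a1 f] le1 True S1F f by blast
  next
    case False
    hence s2: "s \<in> S2" using s by blast
    have "FL s a2" using L2 s2 unfolding is_lub_def by blast
    moreover have "a2 \<in> FS" using L2 unfolding is_lub_def by blast
    ultimately show ?thesis using po_trans[OF fpo, of s a2 f] le2 s2 S2F f by blast
  qed
  have cf3: "consistent_family \<Omega> D le I3 b3 (\<lambda>i. Oset \<Omega> (downset \<Omega> (W3 i)))"
    unfolding consistent_family_def
  proof (intro allI impI)
    fix J assume J: "J \<subseteq> I3" and ne: "{y\<in>Xhat \<Omega>. \<forall>j\<in>J. y \<in> Oset \<Omega> (downset \<Omega> (W3 j))} \<noteq> {}"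
    then obtain y where y: "y \<in> Xhat \<Omega>" "\<forall>j\<in>J. y \<in> Oset \<Omega> (downset \<Omega> (W3 j))" by blast
    have "le (b3 j) (f y)" if j: "j \<in> J" for j
    proof -
      have "st (b3 j) (W3 j) \<in> S1 \<union> S2" using img J j by blast
      hence "FL (st (b3 j) (W3 j)) f" using sle by blast
      hence "le (st (b3 j) (W3 j) y) (f y)" using y(1) unfolding fun_le_def by blast
      thus ?thesis unfolding st_def step_fun_def using y j by simp
    qed
    thus "\<exists>u\<in>D. \<forall>j\<in>J. le (b3 j) u" using fs_val[OF c8 f y(1)] by blast
  qed
  have L3: "is_lub FS FL (S1 \<union> S2) (step_join \<Omega> D le I3 b3 (\<lambda>i. Oset \<Omega> (downset \<Omega> (W3 i))))"
    using BH_lub[OF prop3 cf3] img unfolding st_def by simp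
  have "is_lub FS FL {a1, a2} (step_join \<Omega> D le I3 b3 (\<lambda>i. Oset \<Omega> (downset \<Omega> (W3 i))))"
    using lub_union2[OF fpo L1 L2 L3 S1F S2F] .
  moreover have "step_join \<Omega> D le I3 b3 (\<lambda>i. Oset \<Omega> (downset \<Omega> (W3 i))) \<in> BH"
    using BH_intro[OF fin cf3 prop3] .
  ultimately show ?thesis by blast
qed

lemma fs_basis: "domain_basis FS FL BH"
  unfolding domain_basis_def
proof (intro conjI ballI)
  have fpo: "poset_on FS FL" by (rule fs_po[OF e _ _ bc]) (simp_all add: un int)
  show BF: "BH \<subseteq> FS" using basis_sub[OF c8 D0D] .
  fix f assume f: "f \<in> FS"
  let ?A = "{a\<in>BH. way_below FS FL a f}"
  show "directed_in FS FL ?A"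
    unfolding directed_in_def
  proof (intro conjI ballI)
    show "?A \<subseteq> FS" using BF by blast
    obtain a where a: "a \<in> BH" "\<forall>g\<in>FS. FL a g" using bot_BH by blast
    hence "way_below FS FL a f" using least_wb BF f by blast
    thus "?A \<noteq> {}" using a by blast
    fix a1 a2 assume a12: "a1 \<in> ?A" "a2 \<in> ?A"
    hence "FL a1 f" "FL a2 f" using wb_le[OF fpo] by blast+
    then obtain a3 where a3: "a3 \<in> BH" "is_lub FS FL {a1, a2} a3" using BH_join a12 f by blast
    have "way_below FS FL a3 f" using wb_lub2[OF fpo _ _ a3(2)] a12 by blast
    moreover have "FL a1 a3" "FL a2 a3" using a3(2) unfolding is_lub_def by blast+
    ultimately show "\<exists>z\<in>?A. FL a1 z \<and> FL a2 z" using a3(1) by blast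
  qed
  show "is_lub FS FL ?A f"
    unfolding is_lub_def
  proof (intro conjI ballI impI)
    show "f \<in> FS" by fact
    show "FL a f" if "a \<in> ?A" for a using that wb_le[OF fpo] by blast
    fix u assume u: "u \<in> FS" "\<forall>a\<in>?A. FL a u"
    show "FL f u" unfolding fun_le_def
    proof
      fix y assume y: "y \<in> Xhat \<Omega>"
      have fy: "f y \<in> D" using fs_val[OF c8 f y] .
      have "le b (u y)" if b: "b \<in> {b\<in>D0. way_below D le b (f y)}" for b
      proof -
        have bD: "b \<in> D" using b D0D by blast
        obtain W where W: "W \<in> \<Omega>" "y \<in> Oset \<Omega> (downset \<Omega> W)"
          "way_below FS FL (step_fun \<Omega> D le b (Oset \<Omega> (downset \<Omega> W))) f"
          using step_wb[OF c8 f y bD] b by blast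
        have "step_fun \<Omega> D le b (Oset \<Omega> (downset \<Omega> W)) \<in> ?A" using single_BH[OF W(1)] b W(3) by blast
        hence "FL (step_fun \<Omega> D le b (Oset \<Omega> (downset \<Omega> W))) u" using u by blast
        hence "le (step_fun \<Omega> D le b (Oset \<Omega> (downset \<Omega> W)) y) (u y)" using y unfolding fun_le_def by blast
        thus ?thesis unfolding step_fun_def using y W(2) by simp
      qed
      thus "le (f y) (u y)" using D0 fy fs_val[OF c8 u(1) y] unfolding domain_basis_def is_lub_def by blast
    qed
  qed
qed

end


lemma step_join_cong:
  assumes "\<And>i. i \<in> I \<Longrightarrow> b i = b' i" "\<And>i. i \<in> I \<Longrightarrow> Ob i = Ob' i"
  shows "step_join \<Omega> D le I b Ob = step_join \<Omega> D le I b' Ob'"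
proof (rule ext)
  fix y
  have "(\<lambda>i. step_fun \<Omega> D le (b i) (Ob i) y) ` I = (\<lambda>i. step_fun \<Omega> D le (b' i) (Ob' i) y) ` I"
    using assms by (intro image_cong) auto
  thus "step_join \<Omega> D le I b Ob y = step_join \<Omega> D le I b' Ob' y" unfolding step_join_def by simp
qed

lemma countable_BH:
  assumes cO: "countable \<Omega>" and cB: "countable B0"
  shows "countable (basis_hat \<Omega> D le B0)"
proof -
  define T where "T = (SIGMA I:{I::nat set. finite I}. (PiE I (\<lambda>_. B0)) \<times> (PiE I (\<lambda>_. \<Omega>)))"
  define g where "g = (\<lambda>(I::nat set, b, W). step_join \<Omega> D le I b (\<lambda>i. Oset \<Omega> (downset \<Omega> (W i))))"
  have cT: "countable T" unfolding T_def
  proof (rule countable_SIGMA)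
    show "countable {I::nat set. finite I}" by (rule countable_Collect_finite)
    fix I :: "nat set" assume "I \<in> {I. finite I}"
    hence fI: "finite I" by simp
    have "countable (PiE I (\<lambda>_. B0))" by (rule countable_PiE[OF fI]) (rule cB)
    moreover have "countable (PiE I (\<lambda>_. \<Omega>))" by (rule countable_PiE[OF fI]) (rule cO)
    ultimately show "countable (PiE I (\<lambda>_. B0) \<times> PiE I (\<lambda>_. \<Omega>))" by (rule countable_SIGMA)
  qed
  have "basis_hat \<Omega> D le B0 \<subseteq> g ` T"
  proof
    fix a assume "a \<in> basis_hat \<Omega> D le B0"
    hence "\<exists>(I::nat set) b W. a = step_join \<Omega> D le I b (\<lambda>i. Oset \<Omega> (downset \<Omega> (W i))) \<and> finite I \<and>
      consistent_family \<Omega> D le I b (\<lambda>i. Oset \<Omega> (downset \<Omega> (W i))) \<and> (\<forall>i\<in>I. W i \<in> \<Omega> \<and> b i \<in> B0)"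
      unfolding basis_hat_def by blast
    then obtain I :: "nat set" and b W where A: "a = step_join \<Omega> D le I b (\<lambda>i. Oset \<Omega> (downset \<Omega> (W i)))"
      "finite I" "\<forall>i\<in>I. W i \<in> \<Omega> \<and> b i \<in> B0" by blast
    have r1: "restrict b I \<in> PiE I (\<lambda>_. B0)" using A(3) by (simp add: PiE_iff)
    have r2: "restrict W I \<in> PiE I (\<lambda>_. \<Omega>)" using A(3) by (simp add: PiE_iff)
    have mem: "(I, restrict b I, restrict W I) \<in> T" unfolding T_def using A(2) r1 r2 by simp
    have "g (I, restrict b I, restrict W I) = step_join \<Omega> D le I (restrict b I) (\<lambda>i. Oset \<Omega> (downset \<Omega> (restrict W I i)))"
      unfolding g_def by simp
    also have "\<dots> = a" unfolding A(1) by (rule step_join_cong) auto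
    finally have ga: "g (I, restrict b I, restrict W I) = a" .
    show "a \<in> g ` T" using ga mem by blast
  qed
  thus ?thesis by (rule countable_subset) (rule countable_image[OF cT])
qed

theorem mainTheorem16:
  fixes T :: "'a topology" and \<Omega> :: "'a set set"
    and D :: "'d set" and le :: "'d \<Rightarrow> 'd \<Rightarrow> bool" and D0 :: "'d set"
  assumes "viable_base T \<Omega>"
    and "bc_domain D le"
    and "domain_basis D le D0"
  shows "bc_domain (fun_space \<Omega> D le) (fun_le \<Omega> le)
       \<and> domain_basis (fun_space \<Omega> D le) (fun_le \<Omega> le) (basis_hat \<Omega> D le D0)
       \<and> (countable \<Omega> \<and> omega_continuous D le \<longrightarrow>
            omega_continuous (fun_space \<Omega> D le) (fun_le \<Omega> le))"
proof -
  have e: "{} \<in> \<Omega>" using assms(1) unfolding viable_base_def by blast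
  have un: "\<And>U V. U\<in>\<Omega> \<Longrightarrow> V\<in>\<Omega> \<Longrightarrow> U\<union>V\<in>\<Omega>" using assms(1) unfolding viable_base_def by blast
  have int: "\<And>U V. U\<in>\<Omega> \<Longrightarrow> V\<in>\<Omega> \<Longrightarrow> U\<inter>V\<in>\<Omega>" using assms(1) unfolding viable_base_def by blast
  note bc = assms(2)
  have fpo: "poset_on (fun_space \<Omega> D le) (fun_le \<Omega> le)" by (rule fs_po[OF e _ _ bc]) (simp_all add: un int)
  have fdc: "dcpo (fun_space \<Omega> D le) (fun_le \<Omega> le)" by (rule fs_dcpo[OF e _ _ bc]) (simp_all add: un int)
  have fb: "domain_basis (fun_space \<Omega> D le) (fun_le \<Omega> le) (basis_hat \<Omega> D le D0)"
    by (rule fs_basis[OF e _ _ bc assms(3)]) (simp_all add: un int)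
  have fbot: "\<exists>b\<in>fun_space \<Omega> D le. \<forall>x\<in>fun_space \<Omega> D le. fun_le \<Omega> le b x"
    by (rule fs_bot[OF e _ _ bc]) (simp_all add: un int)
  have fbc: "\<exists>s. is_lub (fun_space \<Omega> D le) (fun_le \<Omega> le) A s"
    if hA: "A \<subseteq> fun_space \<Omega> D le" "\<exists>u\<in>fun_space \<Omega> D le. \<forall>a\<in>A. fun_le \<Omega> le a u" for A
  proof -
    obtain u where u: "u \<in> fun_space \<Omega> D le" "\<forall>a\<in>A. fun_le \<Omega> le a u" using hA(2) by blast
    show ?thesis by (rule fs_bcompl[OF e _ _ bc hA(1) u]) (simp_all add: un int)
  qed
  have "bc_domain (fun_space \<Omega> D le) (fun_le \<Omega> le)"
    unfolding bc_domain_def using fdc fbot basis_cont[OF fpo fdc fb] fbc by blast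
  moreover have "countable \<Omega> \<and> omega_continuous D le \<longrightarrow> omega_continuous (fun_space \<Omega> D le) (fun_le \<Omega> le)"
  proof
    assume h: "countable \<Omega> \<and> omega_continuous D le"
    then obtain B0 where B0: "countable B0" "domain_basis D le B0" unfolding omega_continuous_def by blast
    have "domain_basis (fun_space \<Omega> D le) (fun_le \<Omega> le) (basis_hat \<Omega> D le B0)"
      by (rule fs_basis[OF e _ _ bc B0(2)]) (simp_all add: un int)
    moreover have "countable (basis_hat \<Omega> D le B0)" using countable_BH h B0(1) by blast
    ultimately show "omega_continuous (fun_space \<Omega> D le) (fun_le \<Omega> le)"
      unfolding omega_continuous_def using fdc by blast
  qed
  ultimately show ?thesis using fb by blast
qed


end
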